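(* Let $K\ge 1$ be an integer, let the potential split as $U=\sum_{i=1}^K U_i$ (one term per mini-batch), and let $\mathcal{L}=\sum_{i=1}^K\mathcal{L}_i$ with \[ \mathcal{L}_i=-(\nabla_{\boldsymbol{\theta}}U_i(\boldsymbol{\theta}))^\top\nabla_{\mathbf{r}}+K^{-1}(\mathbf{M}^{-1}\mathbf{r})^\top\nabla_{\boldsymbol{\theta}}-K^{-1}C(\mathbf{M}^{-1}\mathbf{r})^\top\nabla_{\mathbf{r}}+K^{-1}C\nabla_{\mathbf{r}}^\top\nabla_{\mathbf{r}}. \] For $i=1,\dots,K$ let $\psi_i(\cdot;\eta)$ be a (stochastic) numerical integrator with step size $\eta$ of order $p$ for $\mathcal{L}_i$ in the sense that $\mathbb{E}[\phi(\psi_i(\mathbf{z}_0;\eta))]=\exp(\eta K\mathcal{L}_i)\phi(\mathbf{z}_0)+\mathcal{O}(\eta^{p+1})$. Draw a permutation $\boldsymbol{\pi}=(\pi_1,\dots,\pi_K)$ of $\{1,\dots,K\}$ uniformly at random and set $\mathbf{z}_{fin}=\psi_{\pi_K}(\psi_{\pi_{K-1}}(\cdots\psi_{\pi_1}(\mathbf{z}_0)))$. Then the operator $\mathcal{U}$ defined by $\mathcal{U}\phi(\mathbf{z}_0)=\mathbb{E}[\phi(\mathbf{z}_{fin})]$ (expectation over the permutation and the integrators' randomness) satisfies \[ \mathcal{U}=\exp(\eta K\mathcal{L})+\mathcal{O}(K\eta^{p+1})+\mathcal{O}(K\eta^{3})\quad\text{as }\eta\to0. \]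
   Context: Setting: $\mathbf{z}=[\mathbf{r}^\top,\boldsymbol{\theta}^\top]^\top\in\mathbb{R}^{2d}$, $C>0$, $\mathbf{M}$ symmetric positive definite. For a generator $\mathcal{A}$ of a diffusion, $\exp(t\mathcal{A})\phi(\mathbf{z}_0)$ denotes the solution of the associated Kolmogorov backward equation, i.e. $\mathbb{E}[\phi(\mathbf{z}(t))]$ for the diffusion with generator $\mathcal{A}$ started at $\mathbf{z}_0$; $\mathcal{L}$ is the generator of $d\mathbf{r}=-\nabla U\,dt-C\mathbf{M}^{-1}\mathbf{r}\,dt+\sqrt{2C}\,d\mathbf{w}$, $d\boldsymbol{\theta}=\mathbf{M}^{-1}\mathbf{r}\,dt$. The identities are between operators acting on test functions $\phi$, understood via Taylor expansions in $\eta$. Standing assumptions: $U$ (and each $U_i$) is smooth with bounded derivatives of all orders; test functions $\phi$ are sufficiently many times continuously differentiable with partial derivatives of polynomial growth and $|\phi(\mathbf{z})|\le R(1+|\mathbf{z}|^s)$; each integrator step $\mathbf{z}_1=\psi(\mathbf{z}_0)$ satisfies $|\mathbb{E}(\mathbf{z}_1-\mathbf{z}_0)|\le R'(1+|\mathbf{z}_0|)\eta$ and $|\mathbf{z}_1-\mathbf{z}_0|\le M_n(1+|\mathbf{z}_0|)\sqrt{\eta}$ with $M_n$ having bounded moments of all orders independent of $\eta$. *)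

theory Defs
  imports "HOL-Probability.Probability" "HOL-Combinatorics.Multiset_Permutations"
begin

text \<open>Phase-space points z = (r, theta) with r, theta in R^d (d = CARD('d)).\<close>
type_synonym 'd phase = "(real^'d) \<times> (real^'d)"

definition pd :: "('a::real_normed_vector \<Rightarrow> real) \<Rightarrow> 'a \<Rightarrow> 'a \<Rightarrow> real" where
  "pd f v z = deriv (\<lambda>t. f (z + t *\<^sub>R v)) 0"

primrec iter_dd :: "('a::real_normed_vector \<Rightarrow> real) \<Rightarrow> 'a list \<Rightarrow> 'a \<Rightarrow> real" where
  "iter_dd f [] = f"
| "iter_dd f (v # vs) = pd (iter_dd f vs) v"

definition test_fun :: "('a::real_normed_vector \<Rightarrow> real) \<Rightarrow> bool" where
  "test_fun f \<longleftrightarrow> (\<forall>vs. (\<forall>z. iter_dd f vs differentiable at z) \<and>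
      (\<exists>B q. \<forall>z. \<bar>iter_dd f vs z\<bar> \<le> B * (1 + norm z ^ q)))"

definition smooth_bdd_deriv :: "('a::real_normed_vector \<Rightarrow> real) \<Rightarrow> bool" where
  "smooth_bdd_deriv f \<longleftrightarrow> (\<forall>vs. (\<forall>z. iter_dd f vs differentiable at z) \<and>
      (vs \<noteq> [] \<longrightarrow> bounded (range (iter_dd f vs))))"

definition er :: "'d::finite \<Rightarrow> 'd phase" where "er j = (axis j 1, 0)"
definition eth :: "'d::finite \<Rightarrow> 'd phase" where "eth j = (0, axis j 1)"

text \<open>The operator
  -(grad_theta V)^T grad_r + a (Minv r)^T grad_theta - c (Minv r)^T grad_r + c grad_r^T grad_r.
  The full generator is Lop U 1 C Minv; L_i = Lop (U i) (1/K) (C/K) Minv.\<close>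
definition Lop :: "(real^'d \<Rightarrow> real) \<Rightarrow> real \<Rightarrow> real \<Rightarrow> real^'d^'d
                   \<Rightarrow> ('d::finite phase \<Rightarrow> real) \<Rightarrow> 'd phase \<Rightarrow> real" where
  "Lop V a c Minv \<phi> z =
     (let r = fst z; \<theta> = snd z; u = Minv *v r in
       - (\<Sum>j\<in>UNIV. pd V (axis j 1) \<theta> * pd \<phi> (er j) z)
       + a * (\<Sum>j\<in>UNIV. u $ j * pd \<phi> (eth j) z)
       - c * (\<Sum>j\<in>UNIV. u $ j * pd \<phi> (er j) z)
       + c * (\<Sum>j\<in>UNIV. pd (pd \<phi> (er j)) (er j) z))"

text \<open>exp(t A) phi, understood via its Taylor expansion in t truncated after order N.\<close>
definition texp :: "nat \<Rightarrow> real \<Rightarrow> (('a \<Rightarrow> real) \<Rightarrow> ('a \<Rightarrow> real)) \<Rightarrow> ('a \<Rightarrow> real) \<Rightarrow> 'a \<Rightarrow> real" where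
  "texp N t A \<phi> z = (\<Sum>k\<le>N. t ^ k / fact k * (A ^^ k) \<phi> z)"

definition weak_O :: "(real \<Rightarrow> 'a::real_normed_vector \<Rightarrow> real) \<Rightarrow> (real \<Rightarrow> real) \<Rightarrow> bool" where
  "weak_O R g \<longleftrightarrow> (\<exists>Cc q \<eta>0. \<eta>0 > 0 \<and>
      (\<forall>\<eta>\<in>{0<..\<eta>0}. \<forall>z. \<bar>R \<eta> z\<bar> \<le> Cc * (1 + norm z ^ q) * g \<eta>))"

text \<open>Standing assumptions on a one-step Markov kernel psi(eta) (z1 ~ psi eta z0).\<close>
definition good_step :: "(real \<Rightarrow> 'a::euclidean_space \<Rightarrow> 'a measure) \<Rightarrow> bool" where
  "good_step \<psi> \<longleftrightarrow>
     (\<forall>\<eta>>0. \<psi> \<eta> \<in> borel \<rightarrow>\<^sub>M prob_algebra borel) \<and>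
     (\<exists>R' \<eta>0. \<eta>0 > 0 \<and>
        (\<forall>\<eta>\<in>{0<..\<eta>0}. \<forall>z0. norm (\<integral>z1. (z1 - z0) \<partial>(\<psi> \<eta> z0)) \<le> R' * (1 + norm z0) * \<eta>) \<and>
        (\<forall>m::nat. \<exists>B. \<forall>\<eta>\<in>{0<..\<eta>0}. \<forall>z0.
            (\<integral>\<^sup>+z1. ennreal ((norm (z1 - z0) / ((1 + norm z0) * sqrt \<eta>)) ^ m) \<partial>(\<psi> \<eta> z0))
              \<le> ennreal B))"

primrec run :: "(nat \<Rightarrow> 'a::topological_space \<Rightarrow> 'a measure) \<Rightarrow> nat list \<Rightarrow> 'a \<Rightarrow> 'a measure" where
  "run k [] z = return borel z"
| "run k (i # is) z = bind (k i z) (\<lambda>z'. run k is z')"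

definition Uop :: "nat \<Rightarrow> (nat \<Rightarrow> real \<Rightarrow> 'a::topological_space \<Rightarrow> 'a measure) \<Rightarrow> real
                  \<Rightarrow> ('a \<Rightarrow> real) \<Rightarrow> 'a \<Rightarrow> real" where
  "Uop K \<psi> \<eta> \<phi> z0 = measure_pmf.expectation (pmf_of_set (permutations_of_set {1..K}))
       (\<lambda>\<pi>. \<integral>z. \<phi> z \<partial>(run (\<lambda>i. \<psi> i \<eta>) \<pi> z0))"

end

theory Submission
  imports Defs
begin

definition pb :: "('a::real_normed_vector \<Rightarrow> real) \<Rightarrow> bool" where
  "pb f \<longleftrightarrow> (\<exists>B q. \<forall>z. \<bar>f z\<bar> \<le> B * (1 + norm z ^ q))"

lemma pow_le_aux:
  fixes a :: real assumes "0 \<le> a" "q \<le> q'" shows "a ^ q \<le> 1 + a ^ q'"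
proof (cases "a \<le> 1")
  case True then have "a ^ q \<le> 1" using assms by (simp add: power_le_one)
  then show ?thesis using assms by (smt (verit) zero_le_power)
next
  case False then have "a ^ q \<le> a ^ q'" using assms by (simp add: power_increasing)
  then show ?thesis by simp
qed

lemma pb_nonneg_B: "\<bar>f z\<bar> \<le> B * (1 + norm z ^ q) \<Longrightarrow> 0 \<le> (B::real)"
proof -
  assume "\<bar>f z\<bar> \<le> B * (1 + norm z ^ q)"
  moreover have "0 < 1 + norm z ^ q" by (simp add: add_pos_nonneg)
  ultimately show ?thesis by (metis abs_ge_zero order_trans zero_le_mult_iff not_le less_le)
qed

lemma pb_add: assumes "pb f" "pb g" shows "pb (\<lambda>x. f x + g x)"
proof -
  obtain B1 q1 where 1: "\<forall>z. \<bar>f z\<bar> \<le> B1 * (1 + norm z ^ q1)" using assms(1) pb_def by blast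
  obtain B2 q2 where 2: "\<forall>z. \<bar>g z\<bar> \<le> B2 * (1 + norm z ^ q2)" using assms(2) pb_def by blast
  have B1: "B1 \<ge> 0" using 1 pb_nonneg_B by blast
  have B2: "B2 \<ge> 0" using 2 pb_nonneg_B by blast
  have "\<bar>f z + g z\<bar> \<le> (2 * (B1 + B2)) * (1 + norm z ^ (q1 + q2))" for z
  proof -
    have a: "norm z ^ q1 \<le> 1 + norm z ^ (q1+q2)" "norm z ^ q2 \<le> 1 + norm z ^ (q1+q2)"
      by (auto intro!: pow_le_aux)
    have n: "0 \<le> norm z ^ (q1+q2)" by simp
    have "1 + norm z ^ q1 \<le> 2 * (1 + norm z ^ (q1+q2))" using a n by (unfold distrib_left mult_1_right) linarith
    then have "B1 * (1 + norm z ^ q1) \<le> B1 * (2 * (1 + norm z ^ (q1+q2)))"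
      using B1 by (rule mult_left_mono)
    moreover have "1 + norm z ^ q2 \<le> 2 * (1 + norm z ^ (q1+q2))" using a n by (unfold distrib_left mult_1_right) linarith
    then have "B2 * (1 + norm z ^ q2) \<le> B2 * (2 * (1 + norm z ^ (q1+q2)))"
      using B2 by (rule mult_left_mono)
    moreover have "\<bar>f z + g z\<bar> \<le> B1 * (1 + norm z ^ q1) + B2 * (1 + norm z ^ q2)"
      using 1 2 abs_triangle_ineq[of "f z" "g z"] by (meson add_mono order_trans)
    moreover have "B1 * (2 * (1 + norm z ^ (q1+q2))) + B2 * (2 * (1 + norm z ^ (q1+q2)))
       = (2 * (B1 + B2)) * (1 + norm z ^ (q1 + q2))" by (simp only: distrib_left distrib_right mult_ac)
    ultimately show ?thesis by linarith
  qed
  then show ?thesis unfolding pb_def by blast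
qed

lemma pb_mult: assumes "pb f" "pb g" shows "pb (\<lambda>x. f x * g x)"
proof -
  obtain B1 q1 where 1: "\<forall>z. \<bar>f z\<bar> \<le> B1 * (1 + norm z ^ q1)" using assms(1) pb_def by blast
  obtain B2 q2 where 2: "\<forall>z. \<bar>g z\<bar> \<le> B2 * (1 + norm z ^ q2)" using assms(2) pb_def by blast
  have B1: "B1 \<ge> 0" using 1 pb_nonneg_B by blast
  have B2: "B2 \<ge> 0" using 2 pb_nonneg_B by blast
  have "\<bar>f z * g z\<bar> \<le> (3 * B1 * B2) * (1 + norm z ^ (q1 + q2))" for z
  proof -
    have a: "norm z ^ q1 \<le> 1 + norm z ^ (q1+q2)" "norm z ^ q2 \<le> 1 + norm z ^ (q1+q2)"
      by (auto intro!: pow_le_aux)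
    have "\<bar>f z * g z\<bar> \<le> (B1 * (1 + norm z ^ q1)) * (B2 * (1 + norm z ^ q2))"
      unfolding abs_mult using 1 2 B1 B2 by (intro mult_mono) (auto intro!: mult_nonneg_nonneg add_nonneg_nonneg)
    also have "\<dots> = B1 * B2 * (1 + norm z ^ q1 + norm z ^ q2 + norm z ^ (q1+q2))"
      by (simp add: algebra_simps power_add)
    also have "\<dots> \<le> B1 * B2 * (3 * (1 + norm z ^ (q1+q2)))"
      using a B1 B2 by (intro mult_left_mono) auto
    also have "\<dots> = (3*B1*B2) * (1 + norm z ^ (q1+q2))" by (simp only: mult_ac)
    finally show ?thesis .
  qed
  then show ?thesis unfolding pb_def by blast
qed

lemma pb_const: "pb (\<lambda>x. c)"
  unfolding pb_def by (rule exI[of _ "\<bar>c\<bar>"], rule exI[of _ 0]) auto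

lemma pb_bounded: assumes "\<forall>z. \<bar>f z\<bar> \<le> B" shows "pb f"
proof -
  have "\<bar>f z\<bar> \<le> B * (1 + norm z ^ 0)" for z
  proof -
    have "\<bar>f z\<bar> \<le> B" using assms by blast
    then show ?thesis by simp
  qed
  then show ?thesis unfolding pb_def by blast
qed

lemma pb_linear: assumes "bounded_linear f" shows "pb (f :: _ \<Rightarrow> real)"
proof -
  obtain K where K: "\<And>x. norm (f x) \<le> norm x * K" "K > 0"
    using bounded_linear.pos_bounded[OF assms] by blast
  have "\<bar>f z\<bar> \<le> K * (1 + norm z ^ 1)" for z
    using K(1)[of z] K(2) by (simp add: algebra_simps)
  then show ?thesis unfolding pb_def by blast
qed

lemma pd_has_deriv:
  assumes "f differentiable at z"
  shows "((\<lambda>t. f (z + t *\<^sub>R v)) has_real_derivative pd f v z) (at 0)"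
proof -
  have "((\<lambda>t::real. z + t *\<^sub>R v) has_derivative (\<lambda>t. t *\<^sub>R v)) (at 0)"
    by (auto intro!: derivative_eq_intros)
  then have "(\<lambda>t::real. z + t *\<^sub>R v) differentiable at 0"
    unfolding differentiable_def by blast
  moreover have "f differentiable at ((\<lambda>t::real. z + t *\<^sub>R v) 0)" using assms by simp
  ultimately have "(\<lambda>t. f (z + t *\<^sub>R v)) differentiable at 0"
    using differentiable_compose[of f "\<lambda>t::real. z + t *\<^sub>R v" 0 UNIV] by blast
  then show ?thesis unfolding pd_def by (simp add: DERIV_deriv_iff_real_differentiable)
qed

lemma pd_add: "f differentiable at z \<Longrightarrow> g differentiable at z \<Longrightarrow>
   pd (\<lambda>x. f x + g x) v z = pd f v z + pd g v z"
  unfolding pd_def[of "\<lambda>x. f x + g x"]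
  by (intro DERIV_imp_deriv DERIV_add pd_has_deriv)

lemma pd_mult: assumes "f differentiable at z" "g differentiable at z"
  shows "pd (\<lambda>x. f x * g x) v z = pd f v z * g z + f z * pd g v z"
proof -
  have "((\<lambda>t. f (z + t *\<^sub>R v) * g (z + t *\<^sub>R v)) has_real_derivative
      f (z + 0 *\<^sub>R v) * pd g v z + pd f v z * g (z + 0 *\<^sub>R v)) (at 0)"
    by (rule DERIV_mult'[OF pd_has_deriv[OF assms(1)] pd_has_deriv[OF assms(2)]])
  then have "((\<lambda>t. f (z + t *\<^sub>R v) * g (z + t *\<^sub>R v)) has_real_derivative
      f z * pd g v z + pd f v z * g z) (at 0)" by simp
  then have "pd (\<lambda>x. f x * g x) v z = f z * pd g v z + pd f v z * g z"
    unfolding pd_def[of "\<lambda>x. f x * g x"] by (rule DERIV_imp_deriv)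
  then show ?thesis by (simp only: add.commute)
qed

lemma pd_cmult: "f differentiable at z \<Longrightarrow> pd (\<lambda>x. c * f x) v z = c * pd f v z"
  unfolding pd_def[of "\<lambda>x. c * f x"]
  by (intro DERIV_imp_deriv DERIV_cmult pd_has_deriv)

lemma pd_const: "pd (\<lambda>x. c) v z = 0"
  unfolding pd_def by simp

lemma pd_sum: "finite S \<Longrightarrow> (\<forall>i\<in>S. f i differentiable at z) \<Longrightarrow>
   pd (\<lambda>x. \<Sum>i\<in>S. f i x) v z = (\<Sum>i\<in>S. pd (f i) v z)"
  unfolding pd_def[of "\<lambda>x. \<Sum>i\<in>S. f i x"]
  by (intro DERIV_imp_deriv DERIV_sum pd_has_deriv) auto

lemma pd_linear: assumes "bounded_linear l" shows "pd l v z = l v"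
proof -
  interpret bounded_linear l by fact
  have "(\<lambda>t. l (z + t *\<^sub>R v)) = (\<lambda>t. l z + t * l v)"
    by (auto simp: add scale)
  moreover have "((\<lambda>t. l z + t * l v) has_real_derivative l v) (at 0)"
    by (auto intro!: derivative_eq_intros)
  ultimately show ?thesis unfolding pd_def by (simp add: DERIV_imp_deriv)
qed

lemma iter_dd_pd: "iter_dd (pd f v) vs = iter_dd f (vs @ [v])"
  by (induction vs) auto

lemma iter_dd_add:
  "(\<forall>us z. length us < length vs \<longrightarrow> iter_dd f us differentiable at z \<and> iter_dd g us differentiable at z)
   \<Longrightarrow> iter_dd (\<lambda>x. f x + g x) vs = (\<lambda>x. iter_dd f vs x + iter_dd g vs x)"
proof (induction vs)
  case Nil then show ?case by simp
next
  case (Cons v vs)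
  then have "iter_dd (\<lambda>x. f x + g x) vs = (\<lambda>x. iter_dd f vs x + iter_dd g vs x)" by auto
  moreover have "\<forall>z. iter_dd f vs differentiable at z \<and> iter_dd g vs differentiable at z"
    using Cons.prems by auto
  ultimately show ?case by (auto simp: pd_add)
qed

lemma test_fun_iff: "test_fun f \<longleftrightarrow> (\<forall>vs z. iter_dd f vs differentiable at z) \<and> (\<forall>vs. pb (iter_dd f vs))"
  unfolding test_fun_def pb_def by blast

lemma test_fun_diff: "test_fun f \<Longrightarrow> f differentiable at z"
  unfolding test_fun_iff by (metis iter_dd.simps(1))

lemma test_fun_pb: "test_fun f \<Longrightarrow> pb f"
  unfolding test_fun_iff by (metis iter_dd.simps(1))

lemma test_fun_pd: "test_fun f \<Longrightarrow> test_fun (pd f v)"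
  unfolding test_fun_iff iter_dd_pd by blast

lemma iter_dd_const: "iter_dd (\<lambda>x. c) vs = (\<lambda>x. if vs = [] then c else 0)"
  by (induction vs) (auto simp: pd_const)

lemma test_fun_const: "test_fun (\<lambda>x. c)"
  unfolding test_fun_iff iter_dd_const by (auto simp: pb_const)

lemma test_fun_add: assumes "test_fun f" "test_fun g" shows "test_fun (\<lambda>x. f x + g x)"
proof -
  have "iter_dd (\<lambda>x. f x + g x) vs = (\<lambda>x. iter_dd f vs x + iter_dd g vs x)" for vs
    using assms by (intro iter_dd_add) (auto simp: test_fun_iff)
  then show ?thesis using assms by (auto simp: test_fun_iff intro: pb_add)
qed

lemma test_mult_aux:
  "\<forall>f g. test_fun f \<longrightarrow> test_fun g \<longrightarrow> (\<forall>vs. length vs \<le> n \<longrightarrow>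
      (\<forall>z. iter_dd (\<lambda>x. f x * g x) vs differentiable at z) \<and> pb (iter_dd (\<lambda>x. f x * g x) vs))"
proof (induction n)
  case 0
  show ?case
  proof (intro allI impI)
    fix f g :: "'a \<Rightarrow> real" and vs :: "'a list"
    assume f: "test_fun f" and g: "test_fun g" and len: "length vs \<le> 0"
    then have "vs = []" by simp
    moreover have "\<forall>z. (\<lambda>x. f x * g x) differentiable at z"
      using f g test_fun_diff differentiable_mult by blast
    moreover have "pb (\<lambda>x. f x * g x)" using f g test_fun_pb pb_mult by blast
    ultimately show "(\<forall>z. iter_dd (\<lambda>x. f x * g x) vs differentiable at z) \<and> pb (iter_dd (\<lambda>x. f x * g x) vs)"
      by simp
  qed
next
  case (Suc n)
  show ?case
  proof (intro allI impI)
    fix f g :: "'a \<Rightarrow> real" and vs :: "'a list"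
    assume f: "test_fun f" and g: "test_fun g" and len: "length vs \<le> Suc n"
    show "(\<forall>z. iter_dd (\<lambda>x. f x * g x) vs differentiable at z) \<and> pb (iter_dd (\<lambda>x. f x * g x) vs)"
    proof (cases "length vs \<le> n")
      case True then show ?thesis using Suc.IH f g by blast
    next
      case False
      then have ln: "length vs = Suc n" using len by simp
      then obtain ws v where vs: "vs = ws @ [v]" by (metis length_Suc_conv_rev)
      have lws: "length ws = n" using ln vs by simp
      have fv: "test_fun (pd f v)" and gv: "test_fun (pd g v)" using f g by (auto intro: test_fun_pd)
      have pdfg: "pd (\<lambda>x. f x * g x) v = (\<lambda>x. pd f v x * g x + f x * pd g v x)"
        using f g by (auto simp: pd_mult test_fun_diff)
      have eq: "iter_dd (\<lambda>x. f x * g x) vs =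
         (\<lambda>x. iter_dd (\<lambda>x. pd f v x * g x) ws x + iter_dd (\<lambda>x. f x * pd g v x) ws x)"
        unfolding vs iter_dd_pd[symmetric] pdfg
        apply (rule iter_dd_add)
        using Suc.IH fv gv f g lws by auto
      have d1: "\<forall>z. iter_dd (\<lambda>x. pd f v x * g x) ws differentiable at z"
        and p1: "pb (iter_dd (\<lambda>x. pd f v x * g x) ws)"
        using Suc.IH fv g lws by auto
      have d2: "\<forall>z. iter_dd (\<lambda>x. f x * pd g v x) ws differentiable at z"
        and p2: "pb (iter_dd (\<lambda>x. f x * pd g v x) ws)"
        using Suc.IH f gv lws by auto
      show ?thesis unfolding eq using d1 d2 p1 p2
        by (auto intro: differentiable_add pb_add)
    qed
  qed
qed

lemma test_fun_mult: assumes "test_fun f" "test_fun g" shows "test_fun (\<lambda>x. f x * g x)"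
  unfolding test_fun_iff[of "\<lambda>x. f x * g x"]
proof (intro conjI allI)
  fix vs z show "iter_dd (\<lambda>x. f x * g x) vs differentiable at z"
    using test_mult_aux[of "length vs"] assms by blast
next
  fix vs show "pb (iter_dd (\<lambda>x. f x * g x) vs)"
    using test_mult_aux[of "length vs"] assms by blast
qed

lemma test_fun_cmult: "test_fun f \<Longrightarrow> test_fun (\<lambda>x. c * f x)"
  by (intro test_fun_mult test_fun_const)

lemma test_fun_uminus: "test_fun f \<Longrightarrow> test_fun (\<lambda>x. - f x)"
  using test_fun_cmult[of f "-1"] by simp

lemma test_fun_diff': "test_fun f \<Longrightarrow> test_fun g \<Longrightarrow> test_fun (\<lambda>x. f x - g x)"
  using test_fun_add[of f "\<lambda>x. - g x"] test_fun_uminus[of g] by simp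

lemma test_fun_sum: "finite S \<Longrightarrow> (\<forall>i\<in>S. test_fun (f i)) \<Longrightarrow> test_fun (\<lambda>x. \<Sum>i\<in>S. f i x)"
  by (induction S rule: finite_induct) (auto intro: test_fun_add test_fun_const)

lemma test_fun_sum_list: "(\<forall>i\<in>set is. test_fun (f i)) \<Longrightarrow> test_fun (\<lambda>x. \<Sum>i\<leftarrow>is. f i x)"
  by (induction "is") (auto intro: test_fun_add test_fun_const)

lemma iter_dd_linear:
  assumes "bounded_linear l"
  shows "iter_dd l (v # vs) = (\<lambda>x. if vs = [] then l v else 0)"
proof (induction vs arbitrary: v)
  case Nil then show ?case using pd_linear[OF assms] by auto
next
  case (Cons u vs) then show ?case by (auto simp: pd_const)
qed

lemma test_fun_linear: assumes "bounded_linear l" shows "test_fun (l :: _ \<Rightarrow> real)"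
  unfolding test_fun_iff
proof (intro conjI allI)
  fix vs z show "iter_dd l vs differentiable at z"
  proof (cases vs)
    case Nil then show ?thesis using assms by (simp add: bounded_linear_imp_differentiable)
  next
    case (Cons a list) then show ?thesis
      unfolding Cons iter_dd_linear[OF assms] by (cases "list = []") simp_all
  qed
next
  fix vs show "pb (iter_dd l vs)"
  proof (cases vs)
    case Nil then show ?thesis using assms by (simp add: pb_linear)
  next
    case (Cons a list) then show ?thesis
      unfolding Cons iter_dd_linear[OF assms] by (cases "list = []") (simp_all add: pb_const)
  qed
qed

lemma iter_dd_snd: "iter_dd (\<lambda>z. h (snd z)) vs = (\<lambda>z. iter_dd h (map snd vs) (snd z))"
  by (induction vs) (auto simp: pd_def)

lemma test_fun_snd:
  assumes "smooth_bdd_deriv V"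
  shows "test_fun (\<lambda>z::('a::real_normed_vector \<times> 'b::real_normed_vector). pd V e (snd z))"
  unfolding test_fun_iff
proof (intro conjI allI)
  fix vs :: "('a \<times> 'b) list" and z :: "'a \<times> 'b"
  have "iter_dd V (map snd vs @ [e]) differentiable at (snd z)"
    using assms unfolding smooth_bdd_deriv_def by blast
  then show "iter_dd (\<lambda>z. pd V e (snd z)) vs differentiable at z"
    unfolding iter_dd_snd iter_dd_pd
    using differentiable_compose[of "iter_dd V (map snd vs @ [e])" snd z UNIV]
      bounded_linear_imp_differentiable[OF bounded_linear_snd] by blast
next
  fix vs :: "('a \<times> 'b) list"
  have "bounded (range (iter_dd V (map snd vs @ [e])))"
    using assms unfolding smooth_bdd_deriv_def by blast
  then obtain B where "\<forall>y. \<bar>iter_dd V (map snd vs @ [e]) y\<bar> \<le> B"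
    unfolding bounded_real by blast
  then show "pb (iter_dd (\<lambda>z. pd V e (snd z)) vs)"
    unfolding iter_dd_snd iter_dd_pd by (intro pb_bounded) auto
qed

lemma Lop_eq: "Lop V a c Minv \<phi> = (\<lambda>z.
       - (\<Sum>j\<in>UNIV. pd V (axis j 1) (snd z) * pd \<phi> (er j) z)
       + a * (\<Sum>j\<in>UNIV. (Minv *v fst z) $ j * pd \<phi> (eth j) z)
       - c * (\<Sum>j\<in>UNIV. (Minv *v fst z) $ j * pd \<phi> (er j) z)
       + c * (\<Sum>j\<in>UNIV. pd (pd \<phi> (er j)) (er j) z))"
  by (rule ext) (simp add: Lop_def Let_def)

lemma bl_coord: "bounded_linear (\<lambda>z::('d::finite) phase. ((Minv::real^'d^'d) *v fst z) $ j)"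
proof -
  have "bounded_linear (\<lambda>z::('d::finite) phase. ((Minv::real^'d^'d) *v fst z))"
    using bounded_linear_compose[OF matrix_vector_mul_bounded_linear[of Minv] bounded_linear_fst] .
  from bounded_linear_compose[OF bounded_linear_vec_nth[of j] this] show ?thesis .
qed

lemma test_fun_Lop:
  assumes V: "smooth_bdd_deriv V" and f: "test_fun \<phi>"
  shows "test_fun (Lop V a c Minv \<phi>)"
proof -
  have t1: "test_fun (\<lambda>z. - (\<Sum>j\<in>UNIV. pd V (axis j 1) (snd z) * pd \<phi> (er j) z))"
    apply (rule test_fun_uminus)
    apply (rule test_fun_sum)
     apply simp
    using test_fun_mult[OF test_fun_snd[OF V] test_fun_pd[OF f]] by blast
  have t2: "test_fun (\<lambda>z. (\<Sum>j\<in>UNIV. (Minv *v fst z) $ j * pd \<phi> (w j) z))" for w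
    apply (rule test_fun_sum)
     apply simp
    using test_fun_mult[OF test_fun_linear[OF bl_coord] test_fun_pd[OF f]] by blast
  have t3: "test_fun (\<lambda>z. (\<Sum>j\<in>UNIV. pd (pd \<phi> (er j)) (er j) z))"
    apply (rule test_fun_sum)
     apply simp
    using test_fun_pd[OF test_fun_pd[OF f]] by blast
  show ?thesis unfolding Lop_eq
    by (intro test_fun_add test_fun_diff' t1 t3 test_fun_cmult t2)
qed

lemma test_fun_funpow:
  "(\<And>f. test_fun f \<Longrightarrow> test_fun (L f)) \<Longrightarrow> test_fun f \<Longrightarrow> test_fun (((L::('a::real_normed_vector\<Rightarrow>real)\<Rightarrow>('a\<Rightarrow>real)) ^^ n) f)"
  by (induction n) auto

lemma pd_add_fun: "test_fun f \<Longrightarrow> test_fun g \<Longrightarrow> pd (\<lambda>x. f x + g x) v = (\<lambda>z. pd f v z + pd g v z)"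
  by (rule ext) (simp add: pd_add test_fun_diff)

lemma pd_cmult_fun: "test_fun f \<Longrightarrow> pd (\<lambda>x. k * f x) v = (\<lambda>z. k * pd f v z)"
  by (rule ext) (simp add: pd_cmult test_fun_diff)

lemma Lop_add:
  assumes f: "test_fun f" and g: "test_fun g"
  shows "Lop V a c Minv (\<lambda>x. f x + g x) = (\<lambda>z. Lop V a c Minv f z + Lop V a c Minv g z)"
proof -
  have 1: "pd (\<lambda>x. f x + g x) v = (\<lambda>z. pd f v z + pd g v z)" for v
    using f g by (rule pd_add_fun)
  have 2: "pd (\<lambda>z. pd f v z + pd g v z) u = (\<lambda>z. pd (pd f v) u z + pd (pd g v) u z)" for u v
    using f g by (intro pd_add_fun test_fun_pd)
  show ?thesis unfolding Lop_eq 1 2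
    by (rule ext) (simp add: sum.distrib algebra_simps)
qed

lemma Lop_cmult:
  assumes f: "test_fun f"
  shows "Lop V a c Minv (\<lambda>x. k * f x) = (\<lambda>z. k * Lop V a c Minv f z)"
proof -
  have 1: "pd (\<lambda>x. k * f x) v = (\<lambda>z. k * pd f v z)" for v
    using f by (rule pd_cmult_fun)
  have 2: "pd (\<lambda>z. k * pd f v z) u = (\<lambda>z. k * pd (pd f v) u z)" for u v
    using f by (intro pd_cmult_fun test_fun_pd)
  show ?thesis unfolding Lop_eq 1 2
    by (rule ext) (simp add: sum_distrib_left algebra_simps)
qed

lemma pd_const_fun: "pd (\<lambda>x. c) v = (\<lambda>z. 0)"
  by (rule ext) (simp add: pd_const)

lemma Lop_zero: "Lop V a c Minv (\<lambda>x. 0) = (\<lambda>z. 0)"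
  unfolding Lop_eq by (simp add: pd_const_fun)

lemma Lop_sum_list:
  "(\<forall>i\<in>set is. test_fun (f i)) \<Longrightarrow>
    Lop V a c Minv (\<lambda>x. \<Sum>i\<leftarrow>is. f i x) = (\<lambda>z. \<Sum>i\<leftarrow>is. Lop V a c Minv (f i) z)"
proof (induction "is")
  case Nil then show ?case by (simp add: Lop_zero)
next
  case (Cons i "is")
  have "Lop V a c Minv (\<lambda>x. \<Sum>i\<leftarrow>i # is. f i x) = Lop V a c Minv (\<lambda>x. f i x + (\<Sum>i\<leftarrow>is. f i x))"
    by simp
  also have "\<dots> = (\<lambda>z. Lop V a c Minv (f i) z + Lop V a c Minv (\<lambda>x. \<Sum>i\<leftarrow>is. f i x) z)"
    using Cons.prems Lop_add[of "f i" "\<lambda>x. \<Sum>i\<leftarrow>is. f i x"] test_fun_sum_list[of "is" f] by auto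
  finally show ?case using Cons by simp
qed

lemma Lop_sum:
  "finite S \<Longrightarrow> (\<forall>i\<in>S. test_fun (f i)) \<Longrightarrow>
    Lop V a c Minv (\<lambda>x. \<Sum>i\<in>S. f i x) = (\<lambda>z. \<Sum>i\<in>S. Lop V a c Minv (f i) z)"
proof (induction S rule: finite_induct)
  case empty then show ?case by (simp add: Lop_zero)
next
  case (insert i S)
  have "Lop V a c Minv (\<lambda>x. \<Sum>i\<in>insert i S. f i x) = Lop V a c Minv (\<lambda>x. f i x + (\<Sum>i\<in>S. f i x))"
    using insert by simp
  also have "\<dots> = (\<lambda>z. Lop V a c Minv (f i) z + Lop V a c Minv (\<lambda>x. \<Sum>i\<in>S. f i x) z)"
    using insert Lop_add[of "f i" "\<lambda>x. \<Sum>i\<in>S. f i x"] test_fun_sum[of S f] by auto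
  finally show ?case using insert by simp
qed

lemma Lfull_eq:
  fixes U :: "'i \<Rightarrow> real^'d \<Rightarrow> real" and Minv :: "real^'d^'d" and \<phi> :: "('d::finite) phase \<Rightarrow> real"
  assumes fin: "finite S" and ne: "S \<noteq> {}" and dU: "\<forall>i\<in>S. \<forall>\<theta>. U i differentiable at \<theta>"
  shows "Lop (\<lambda>\<theta>. \<Sum>i\<in>S. U i \<theta>) a c Minv \<phi> =
         (\<lambda>z. \<Sum>i\<in>S. Lop (U i) (a / real (card S)) (c / real (card S)) Minv \<phi> z)"
proof (rule ext)
  fix z :: "'d phase"
  define n where "n = real (card S)"
  have n: "n > 0" using fin ne by (simp add: n_def card_gt_0_iff)
  have pdU: "pd (\<lambda>\<theta>. \<Sum>i\<in>S. U i \<theta>) v \<theta> = (\<Sum>i\<in>S. pd (U i) v \<theta>)" for v \<theta>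
    using fin dU by (intro pd_sum) auto
  define A where "A = (\<Sum>j\<in>UNIV. (Minv *v fst z) $ j * pd \<phi> (eth j) z)"
  define B where "B = (\<Sum>j\<in>UNIV. (Minv *v fst z) $ j * pd \<phi> (er j) z)"
  define D where "D = (\<Sum>j\<in>UNIV. pd (pd \<phi> (er j)) (er j) z)"
  define P where "P i = (\<Sum>j\<in>UNIV. pd (U i) (axis j 1) (snd z) * pd \<phi> (er j) z)" for i
  have lhs: "Lop (\<lambda>\<theta>. \<Sum>i\<in>S. U i \<theta>) a c Minv \<phi> z = - (\<Sum>i\<in>S. P i) + a * A - c * B + c * D"
    unfolding Lop_eq pdU A_def B_def D_def P_def
    by (simp add: sum_distrib_right sum.swap[of _ S UNIV])
  have rhs: "(\<Sum>i\<in>S. Lop (U i) (a / n) (c / n) Minv \<phi> z) =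
      (\<Sum>i\<in>S. - P i + (a / n * A - c / n * B + c / n * D))"
    unfolding Lop_eq A_def B_def D_def P_def by (simp add: algebra_simps)
  also have "\<dots> = - (\<Sum>i\<in>S. P i) + n * (a / n * A - c / n * B + c / n * D)"
    by (simp only: sum.distrib sum_negf sum_constant n_def distrib_left)
  also have "\<dots> = - (\<Sum>i\<in>S. P i) + a * A - c * B + c * D"
    using n by (simp add: algebra_simps)
  finally show "Lop (\<lambda>\<theta>. \<Sum>i\<in>S. U i \<theta>) a c Minv \<phi> z =
         (\<Sum>i\<in>S. Lop (U i) (a / real (card S)) (c / real (card S)) Minv \<phi> z)"
    using lhs n_def by simp
qed

lemma enn2real_integral:
  assumes G: "G \<in> borel_measurable M" and fin: "(\<integral>\<^sup>+x. G x \<partial>M) < \<infinity>"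
  shows "integrable M (\<lambda>x. enn2real (G x))" and "(\<integral>x. enn2real (G x) \<partial>M) = enn2real (\<integral>\<^sup>+x. G x \<partial>M)"
proof -
  have ae: "AE x in M. G x \<noteq> \<infinity>" using nn_integral_PInf_AE[OF G] fin by simp
  have eq: "(\<integral>\<^sup>+x. ennreal (enn2real (G x)) \<partial>M) = (\<integral>\<^sup>+x. G x \<partial>M)"
    by (rule nn_integral_cong_AE) (use ae in \<open>auto simp: less_top\<close>)
  have m: "(\<lambda>x. enn2real (G x)) \<in> borel_measurable M" using G by measurable
  show "integrable M (\<lambda>x. enn2real (G x))"
    by (rule integrableI_nonneg) (use m eq fin in auto)
  show "(\<integral>x. enn2real (G x) \<partial>M) = enn2real (\<integral>\<^sup>+x. G x \<partial>M)"
    by (subst integral_eq_nn_integral) (use m eq in auto)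
qed

lemma integral_bind_real:
  fixes f :: "'b \<Rightarrow> real"
  assumes N: "N \<in> M \<rightarrow>\<^sub>M subprob_algebra K" and f: "f \<in> borel_measurable K"
    and int: "integrable (M \<bind> N) f" and intN: "\<forall>x\<in>space M. integrable (N x) f"
  shows "integral\<^sup>L (M \<bind> N) f = (\<integral>x. integral\<^sup>L (N x) f \<partial>M)"
proof -
  define Gp where "Gp x = (\<integral>\<^sup>+y. ennreal (f y) \<partial>N x)" for x
  define Gm where "Gm x = (\<integral>\<^sup>+y. ennreal (- f y) \<partial>N x)" for x
  have mp: "Gp \<in> borel_measurable M" unfolding Gp_def
    by (rule measurable_compose[OF N nn_integral_measurable_subprob_algebra]) (use f in measurable)
  have mm: "Gm \<in> borel_measurable M" unfolding Gm_def
    by (rule measurable_compose[OF N nn_integral_measurable_subprob_algebra]) (use f in measurable)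
  have fp: "(\<integral>\<^sup>+y. ennreal (f y) \<partial>(M \<bind> N)) = (\<integral>\<^sup>+x. Gp x \<partial>M)"
    unfolding Gp_def by (rule nn_integral_bind[OF _ N]) (use f in measurable)
  have fm: "(\<integral>\<^sup>+y. ennreal (- f y) \<partial>(M \<bind> N)) = (\<integral>\<^sup>+x. Gm x \<partial>M)"
    unfolding Gm_def by (rule nn_integral_bind[OF _ N]) (use f in measurable)
  have "(\<integral>\<^sup>+y. ennreal (f y) \<partial>(M \<bind> N)) \<le> (\<integral>\<^sup>+y. ennreal (norm (f y)) \<partial>(M \<bind> N))"
    by (intro nn_integral_mono) auto
  also have "\<dots> < \<infinity>" using int by (simp add: integrable_iff_bounded)
  finally have finp: "(\<integral>\<^sup>+x. Gp x \<partial>M) < \<infinity>" using fp by simp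
  have "(\<integral>\<^sup>+y. ennreal (- f y) \<partial>(M \<bind> N)) \<le> (\<integral>\<^sup>+y. ennreal (norm (f y)) \<partial>(M \<bind> N))"
    by (intro nn_integral_mono) auto
  also have "\<dots> < \<infinity>" using int by (simp add: integrable_iff_bounded)
  finally have finm: "(\<integral>\<^sup>+x. Gm x \<partial>M) < \<infinity>" using fm by simp
  have "integral\<^sup>L (M \<bind> N) f = enn2real (\<integral>\<^sup>+x. Gp x \<partial>M) - enn2real (\<integral>\<^sup>+x. Gm x \<partial>M)"
    using real_lebesgue_integral_def[OF int] fp fm by simp
  also have "\<dots> = (\<integral>x. enn2real (Gp x) \<partial>M) - (\<integral>x. enn2real (Gm x) \<partial>M)"
    using enn2real_integral(2)[OF mp finp] enn2real_integral(2)[OF mm finm] by simp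
  also have "\<dots> = (\<integral>x. enn2real (Gp x) - enn2real (Gm x) \<partial>M)"
    using enn2real_integral(1)[OF mp finp] enn2real_integral(1)[OF mm finm] by simp
  also have "\<dots> = (\<integral>x. integral\<^sup>L (N x) f \<partial>M)"
  proof -
    have "\<forall>x\<in>space M. enn2real (Gp x) - enn2real (Gm x) = integral\<^sup>L (N x) f"
      unfolding Gp_def Gm_def using real_lebesgue_integral_def intN by metis
    then show ?thesis by (intro Bochner_Integration.integral_cong) auto
  qed
  finally show ?thesis .
qed

lemma run_Nil: "run k [] = return borel"
  by (rule ext) simp

lemma run_Cons: "run k (i # is) = (\<lambda>z. k i z \<bind> run k is)"
  by (rule ext) simp

lemma run_meas:
  "(\<forall>i\<in>set is. k i \<in> borel \<rightarrow>\<^sub>M prob_algebra borel) \<Longrightarrow> run k is \<in> borel \<rightarrow>\<^sub>M prob_algebra borel"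
proof (induction "is")
  case Nil show ?case unfolding run_Nil by (rule measurable_return_prob_space)
next
  case (Cons i "is")
  then show ?case unfolding run_Cons
    by (intro measurable_bind_prob_space[of "k i" borel borel "run k is" borel]) auto
qed

lemma kernel_prob:
  assumes "k \<in> borel \<rightarrow>\<^sub>M prob_algebra borel"
  shows "prob_space (k z)" and "sets (k z) = sets borel"
  using measurable_space[OF assms, of z] by (auto simp: space_prob_algebra)

lemma wq_le: fixes z :: "'a::real_normed_vector"
  shows "q \<le> q' \<Longrightarrow> 1 + norm z ^ q \<le> 2 * (1 + norm z ^ q')"
proof -
  assume "q \<le> q'"
  then have "norm z ^ q \<le> 1 + norm z ^ q'" by (intro pow_le_aux) auto
  moreover have "0 \<le> norm z ^ q'" by simp
  ultimately show ?thesis by (unfold distrib_left mult_1_right) linarith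
qed

lemma weak_O_cong:
  assumes "weak_O R g" and "\<delta> > 0" and "\<forall>\<eta>\<in>{0<..\<delta>}. \<forall>z. R \<eta> z = R' \<eta> z"
  shows "weak_O R' g"
proof -
  obtain Cc q \<eta>0 where e: "\<eta>0 > 0" "\<forall>\<eta>\<in>{0<..\<eta>0}. \<forall>z. \<bar>R \<eta> z\<bar> \<le> Cc * (1 + norm z ^ q) * g \<eta>"
    using assms(1) unfolding weak_O_def by blast
  have "\<bar>R' \<eta> z\<bar> \<le> Cc * (1 + norm z ^ q) * g \<eta>" if "\<eta> \<in> {0<..min \<eta>0 \<delta>}" for \<eta> z
  proof -
    have "R \<eta> z = R' \<eta> z" using assms(3) that by auto
    moreover have "\<bar>R \<eta> z\<bar> \<le> Cc * (1 + norm z ^ q) * g \<eta>" using e(2) that by auto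
    ultimately show ?thesis by simp
  qed
  moreover have "min \<eta>0 \<delta> > 0" using e assms by simp
  ultimately show ?thesis unfolding weak_O_def by meson
qed

lemma weak_O_absC:
  assumes "weak_O R g" and g: "\<forall>\<eta>>0. 0 \<le> g \<eta>"
  shows "\<exists>Cc q \<eta>0. \<eta>0 > 0 \<and> \<eta>0 \<le> 1 \<and> Cc \<ge> 0 \<and> (\<forall>\<eta>\<in>{0<..\<eta>0}. \<forall>z. \<bar>R \<eta> z\<bar> \<le> Cc * (1 + norm z ^ q) * g \<eta>)"
proof -
  obtain Cc q \<eta>0 where e: "\<eta>0 > 0" "\<forall>\<eta>\<in>{0<..\<eta>0}. \<forall>z. \<bar>R \<eta> z\<bar> \<le> Cc * (1 + norm z ^ q) * g \<eta>"
    using assms(1) unfolding weak_O_def by blast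
  have "\<bar>R \<eta> z\<bar> \<le> \<bar>Cc\<bar> * (1 + norm z ^ q) * g \<eta>" if "\<eta>\<in>{0<..min \<eta>0 1}" for \<eta> z
  proof -
    have "\<bar>R \<eta> z\<bar> \<le> Cc * (1 + norm z ^ q) * g \<eta>" using e that by auto
    moreover have "Cc * (1 + norm z ^ q) * g \<eta> \<le> \<bar>Cc\<bar> * (1 + norm z ^ q) * g \<eta>"
      using g that by (intro mult_right_mono) auto
    ultimately show ?thesis by linarith
  qed
  moreover have "min \<eta>0 1 > 0" "min \<eta>0 1 \<le> 1" using e by auto
  ultimately show ?thesis by (intro exI[of _ "\<bar>Cc\<bar>"] exI[of _ q] exI[of _ "min \<eta>0 1"]) auto
qed

lemma weak_O_I:
  assumes "\<eta>0 > 0" "\<And>\<eta> z. \<eta>\<in>{0<..\<eta>0} \<Longrightarrow> \<bar>R \<eta> z\<bar> \<le> Cc * (1 + norm z ^ q) * g \<eta>"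
  shows "weak_O R g"
  unfolding weak_O_def using assms by blast

lemma weak_O_add:
  assumes 1: "weak_O R1 g" and 2: "weak_O R2 g" and g: "\<forall>\<eta>>0. 0 \<le> g \<eta>"
  shows "weak_O (\<lambda>\<eta> z. R1 \<eta> z + R2 \<eta> z) g"
proof -
  obtain C1 q1 e1 where e1: "e1 > 0" "C1 \<ge> 0" "\<forall>\<eta>\<in>{0<..e1}. \<forall>z. \<bar>R1 \<eta> z\<bar> \<le> C1 * (1 + norm z ^ q1) * g \<eta>"
    using weak_O_absC[OF 1 g] by blast
  obtain C2 q2 e2 where e2: "e2 > 0" "C2 \<ge> 0" "\<forall>\<eta>\<in>{0<..e2}. \<forall>z. \<bar>R2 \<eta> z\<bar> \<le> C2 * (1 + norm z ^ q2) * g \<eta>"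
    using weak_O_absC[OF 2 g] by blast
  have "\<bar>R1 \<eta> z + R2 \<eta> z\<bar> \<le> (2 * C1 + 2 * C2) * (1 + norm z ^ (q1 + q2)) * g \<eta>"
    if "\<eta>\<in>{0<..min e1 e2}" for \<eta> z
  proof -
    have a: "\<bar>R1 \<eta> z\<bar> \<le> C1 * (1 + norm z ^ q1) * g \<eta>" "\<bar>R2 \<eta> z\<bar> \<le> C2 * (1 + norm z ^ q2) * g \<eta>"
      using e1 e2 that by auto
    have gn: "g \<eta> \<ge> 0" using g that by auto
    have "C1 * (1 + norm z ^ q1) * g \<eta> \<le> C1 * (2 * (1 + norm z ^ (q1 + q2))) * g \<eta>"
      using e1(2) gn wq_le[of q1 "q1+q2" z] by (intro mult_right_mono mult_left_mono) auto
    moreover have "C2 * (1 + norm z ^ q2) * g \<eta> \<le> C2 * (2 * (1 + norm z ^ (q1 + q2))) * g \<eta>"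
      using e2(2) gn wq_le[of q2 "q1+q2" z] by (intro mult_right_mono mult_left_mono) auto
    moreover have "C1 * (2 * (1 + norm z ^ (q1 + q2))) * g \<eta> + C2 * (2 * (1 + norm z ^ (q1 + q2))) * g \<eta>
        = (2 * C1 + 2 * C2) * (1 + norm z ^ (q1 + q2)) * g \<eta>"
      by (simp add: algebra_simps)
    ultimately show ?thesis using a abs_triangle_ineq[of "R1 \<eta> z" "R2 \<eta> z"] by linarith
  qed
  moreover have "min e1 e2 > 0" using e1 e2 by simp
  ultimately show ?thesis by (rule weak_O_I[rotated])
qed

lemma weak_O_cmult:
  assumes 1: "weak_O R g" and g: "\<forall>\<eta>>0. 0 \<le> g \<eta>"
  shows "weak_O (\<lambda>\<eta> z. c * R \<eta> z) g"
proof -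
  obtain C1 q1 e1 where e1: "e1 > 0" "C1 \<ge> 0" "\<forall>\<eta>\<in>{0<..e1}. \<forall>z. \<bar>R \<eta> z\<bar> \<le> C1 * (1 + norm z ^ q1) * g \<eta>"
    using weak_O_absC[OF 1 g] by blast
  have "\<bar>c * R \<eta> z\<bar> \<le> (\<bar>c\<bar> * C1) * (1 + norm z ^ q1) * g \<eta>" if "\<eta>\<in>{0<..e1}" for \<eta> z
  proof -
    have "\<bar>c * R \<eta> z\<bar> = \<bar>c\<bar> * \<bar>R \<eta> z\<bar>" by (simp add: abs_mult)
    also have "\<dots> \<le> \<bar>c\<bar> * (C1 * (1 + norm z ^ q1) * g \<eta>)"
      using e1 that by (intro mult_left_mono) auto
    finally show ?thesis by (simp add: mult_ac)
  qed
  then show ?thesis using e1(1) by (rule weak_O_I[rotated])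
qed

lemma weak_O_zero: "weak_O (\<lambda>\<eta> z. 0) g"
  by (rule weak_O_I[of 1 _ 0 0]) auto

lemma weak_O_sum:
  assumes "finite S" "\<forall>i\<in>S. weak_O (R i) g" and g: "\<forall>\<eta>>0. 0 \<le> g \<eta>"
  shows "weak_O (\<lambda>\<eta> z. \<Sum>i\<in>S. R i \<eta> z) g"
  using assms(1,2)
proof (induction S rule: finite_induct)
  case empty then show ?case by (simp add: weak_O_zero)
next
  case (insert i S)
  then have "weak_O (\<lambda>\<eta> z. R i \<eta> z + (\<Sum>i\<in>S. R i \<eta> z)) g"
    by (intro weak_O_add g) auto
  then show ?case using insert by simp
qed

lemma weak_O_mono:
  assumes 1: "weak_O R g" and g: "\<forall>\<eta>>0. 0 \<le> g \<eta>" and "\<delta> > 0" and gh: "\<forall>\<eta>\<in>{0<..\<delta>}. g \<eta> \<le> h \<eta>"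
  shows "weak_O R h"
proof -
  obtain C1 q1 e1 where e1: "e1 > 0" "C1 \<ge> 0" "\<forall>\<eta>\<in>{0<..e1}. \<forall>z. \<bar>R \<eta> z\<bar> \<le> C1 * (1 + norm z ^ q1) * g \<eta>"
    using weak_O_absC[OF 1 g] by blast
  have "\<bar>R \<eta> z\<bar> \<le> C1 * (1 + norm z ^ q1) * h \<eta>" if "\<eta>\<in>{0<..min e1 \<delta>}" for \<eta> z
  proof -
    have "\<bar>R \<eta> z\<bar> \<le> C1 * (1 + norm z ^ q1) * g \<eta>" using e1 that by auto
    also have "\<dots> \<le> C1 * (1 + norm z ^ q1) * h \<eta>"
      using gh that e1(2) by (intro mult_left_mono) (auto intro!: mult_nonneg_nonneg add_nonneg_nonneg)
    finally show ?thesis .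
  qed
  moreover have "min e1 \<delta> > 0" using e1 assms by simp
  ultimately show ?thesis by (rule weak_O_I[rotated])
qed

lemma weak_O_pow_term:
  assumes "pb f" "m \<le> a"
  shows "weak_O (\<lambda>\<eta> z. \<eta> ^ a * f z) (\<lambda>\<eta>. \<eta> ^ m)"
proof -
  obtain B q where B: "\<forall>z. \<bar>f z\<bar> \<le> B * (1 + norm z ^ q)" using assms(1) pb_def by blast
  have "\<bar>\<eta> ^ a * f z\<bar> \<le> B * (1 + norm z ^ q) * \<eta> ^ m" if "\<eta>\<in>{0<..1}" for \<eta> :: real and z
  proof -
    have "\<eta> ^ a \<le> \<eta> ^ m" using that assms(2) by (intro power_decreasing) auto
    have "\<bar>\<eta> ^ a * f z\<bar> = \<eta> ^ a * \<bar>f z\<bar>" using that by (simp add: abs_mult)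
    also have "\<dots> \<le> \<eta> ^ m * (B * (1 + norm z ^ q))"
      using B that \<open>\<eta> ^ a \<le> \<eta> ^ m\<close> by (intro mult_mono) auto
    finally show ?thesis by (simp add: mult_ac)
  qed
  then show ?thesis by (intro weak_O_I[of 1]) auto
qed

lemma weak_O_mult_pow:
  assumes 1: "weak_O R (\<lambda>\<eta>. \<eta> ^ p)" and "m \<le> k + p"
  shows "weak_O (\<lambda>\<eta> z. \<eta> ^ k * R \<eta> z) (\<lambda>\<eta>. \<eta> ^ m)"
proof -
  obtain C1 q1 e1 where e1: "e1 > 0" "e1 \<le> 1" "C1 \<ge> 0" "\<forall>\<eta>\<in>{0<..e1}. \<forall>z. \<bar>R \<eta> z\<bar> \<le> C1 * (1 + norm z ^ q1) * \<eta> ^ p"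
    using weak_O_absC[OF 1] by force
  have "\<bar>\<eta> ^ k * R \<eta> z\<bar> \<le> C1 * (1 + norm z ^ q1) * \<eta> ^ m" if "\<eta>\<in>{0<..e1}" for \<eta> z
  proof -
    have "\<bar>\<eta> ^ k * R \<eta> z\<bar> = \<eta> ^ k * \<bar>R \<eta> z\<bar>" using that by (simp add: abs_mult)
    also have "\<dots> \<le> \<eta> ^ k * (C1 * (1 + norm z ^ q1) * \<eta> ^ p)"
      using e1 that by (intro mult_left_mono) auto
    also have "\<dots> = C1 * (1 + norm z ^ q1) * \<eta> ^ (k + p)" by (simp add: power_add mult_ac)
    also have "\<dots> \<le> C1 * (1 + norm z ^ q1) * \<eta> ^ m"
      using that e1 assms(2) by (intro mult_left_mono power_decreasing) (auto intro!: mult_nonneg_nonneg add_nonneg_nonneg)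
    finally show ?thesis .
  qed
  then show ?thesis using e1(1) by (rule weak_O_I[rotated])
qed

lemma pow_sum_le: fixes a b :: real assumes "0 \<le> a" "0 \<le> b"
  shows "(a + b) ^ q \<le> 2 ^ q * (a ^ q + b ^ q)"
proof -
  have "(a + b) ^ q \<le> (2 * max a b) ^ q" using assms by (intro power_mono) auto
  also have "\<dots> = 2 ^ q * max a b ^ q" by (simp add: power_mult_distrib)
  also have "max a b ^ q \<le> a ^ q + b ^ q" using assms by (cases "a \<le> b") (auto simp: max_def)
  then have "2 ^ q * max a b ^ q \<le> 2 ^ q * (a ^ q + b ^ q)" by simp
  finally show ?thesis .
qed

lemma pointwise_moment:
  fixes a b n1 t :: real
  assumes a: "0 \<le> a" and b: "0 \<le> b" and n1: "0 \<le> n1" "n1 \<le> a + b" and t: "0 < t" "t \<le> 1"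
  shows "1 + n1 ^ q \<le> (1 + a ^ q) * (1 + 2 ^ q + 4 ^ q * (b / ((1 + a) * t)) ^ q)"
proof -
  define s where "s = (1 + a) * t"
  define Y where "Y = (b / s) ^ q"
  have s: "0 < s" "s \<le> 1 + a" using a t by (auto simp: s_def mult_le_cancel_left1)
  have Y: "0 \<le> Y" using b s by (simp add: Y_def)
  have "n1 ^ q \<le> (a + b) ^ q" using n1 by (intro power_mono) auto
  also have "\<dots> \<le> 2 ^ q * (a ^ q + b ^ q)" using a b by (rule pow_sum_le)
  finally have 1: "n1 ^ q \<le> 2 ^ q * (a ^ q + b ^ q)" .
  have "b = s * (b / s)" using s by simp
  then have "b ^ q = s ^ q * Y" unfolding Y_def by (metis power_mult_distrib)
  also have "\<dots> \<le> (1 + a) ^ q * Y" using s Y by (intro mult_right_mono power_mono) auto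
  also have "(1 + a) ^ q \<le> 2 ^ q * (1 ^ q + a ^ q)" using a by (intro pow_sum_le) auto
  then have "(1 + a) ^ q * Y \<le> 2 ^ q * (1 + a ^ q) * Y" using Y by (intro mult_right_mono) auto
  finally have 2: "b ^ q \<le> 2 ^ q * (1 + a ^ q) * Y" .
  have "2 ^ q * b ^ q \<le> 2 ^ q * (2 ^ q * (1 + a ^ q) * Y)" using 2 by (intro mult_left_mono) auto
  moreover have "n1 ^ q \<le> 2 ^ q * a ^ q + 2 ^ q * b ^ q" using 1 by (simp only: distrib_left)
  ultimately have "1 + n1 ^ q \<le> 1 + 2 ^ q * a ^ q + 2 ^ q * (2 ^ q * (1 + a ^ q) * Y)"
    by linarith
  also have "\<dots> = 1 + 2 ^ q * a ^ q + 4 ^ q * (1 + a ^ q) * Y"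
  proof -
    have "(4::real) ^ q = (2 * 2) ^ q" by simp
    then have p4: "(4::real) ^ q = 2 ^ q * 2 ^ q" by (simp only: power_mult_distrib)
    show ?thesis unfolding p4 by (simp only: mult.assoc)
  qed
  also have "\<dots> \<le> (1 + a ^ q) * (1 + 2 ^ q + 4 ^ q * Y)"
  proof -
    have "(1 + a ^ q) * (1 + 2 ^ q + 4 ^ q * Y) = (1 + 2 ^ q * a ^ q + 4 ^ q * (1 + a ^ q) * Y) + (2 ^ q + a ^ q)"
      by (simp add: algebra_simps)
    moreover have "0 \<le> (2::real) ^ q + a ^ q" using a by simp
    ultimately show ?thesis by linarith
  qed
  finally show ?thesis unfolding Y_def s_def .
qed

lemma step_moment:
  fixes \<psi> :: "real \<Rightarrow> 'a::euclidean_space \<Rightarrow> 'a measure"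
  assumes gs: "good_step \<psi>"
  shows "\<exists>B \<eta>0. \<eta>0 > 0 \<and> B \<ge> 0 \<and> (\<forall>\<eta>\<in>{0<..\<eta>0}. \<forall>z.
           (\<integral>\<^sup>+z1. ennreal (1 + norm z1 ^ q) \<partial>\<psi> \<eta> z) \<le> ennreal (B * (1 + norm z ^ q)))"
proof -
  obtain R' \<eta>0 where e0: "\<eta>0 > 0" and meas: "\<forall>\<eta>>0. \<psi> \<eta> \<in> borel \<rightarrow>\<^sub>M prob_algebra borel"
    and mom: "\<forall>m::nat. \<exists>B. \<forall>\<eta>\<in>{0<..\<eta>0}. \<forall>z0.
            (\<integral>\<^sup>+z1. ennreal ((norm (z1 - z0) / ((1 + norm z0) * sqrt \<eta>)) ^ m) \<partial>(\<psi> \<eta> z0)) \<le> ennreal B"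
    using gs unfolding good_step_def by blast
  obtain Bq where Bq: "\<forall>\<eta>\<in>{0<..\<eta>0}. \<forall>z0.
            (\<integral>\<^sup>+z1. ennreal ((norm (z1 - z0) / ((1 + norm z0) * sqrt \<eta>)) ^ q) \<partial>(\<psi> \<eta> z0)) \<le> ennreal Bq"
    using mom by blast
  define B where "B = 1 + 2 ^ q + 4 ^ q * max Bq 0"
  have "(\<integral>\<^sup>+z1. ennreal (1 + norm z1 ^ q) \<partial>\<psi> \<eta> z) \<le> ennreal (B * (1 + norm z ^ q))"
    if \<eta>: "\<eta> \<in> {0<..min \<eta>0 1}" for \<eta> z
  proof -
    have "\<psi> \<eta> \<in> borel \<rightarrow>\<^sub>M prob_algebra borel" using meas \<eta> by auto
    note kp = kernel_prob[OF this, of z]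
    interpret prob_space "\<psi> \<eta> z" by (rule kp(1))
    define W where "W = 1 + norm z ^ q"
    define X where "X z1 = (norm (z1 - z) / ((1 + norm z) * sqrt \<eta>)) ^ q" for z1
    have W: "W \<ge> 1" by (simp add: W_def)
    have t: "0 < sqrt \<eta>" "sqrt \<eta> \<le> 1" using \<eta> by auto
    have pw: "ennreal (1 + norm z1 ^ q) \<le> ennreal (W * (1 + 2 ^ q)) + ennreal (W * 4 ^ q) * ennreal (X z1)" for z1
    proof -
      have "1 + norm z1 ^ q \<le> W * (1 + 2 ^ q + 4 ^ q * X z1)"
        unfolding W_def X_def
        by (rule pointwise_moment) (use t norm_triangle_sub[of z1 z] in \<open>auto simp: add.commute\<close>)
      also have "\<dots> = W * (1 + 2 ^ q) + W * 4 ^ q * X z1" by (simp add: algebra_simps)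
      finally have le: "1 + norm z1 ^ q \<le> W * (1 + 2 ^ q) + W * 4 ^ q * X z1" .
      have X0: "0 \<le> X z1" unfolding X_def
        using \<eta> by (intro zero_le_power divide_nonneg_nonneg mult_nonneg_nonneg) auto
      have e1: "ennreal (W * 4 ^ q) * ennreal (X z1) = ennreal (W * 4 ^ q * X z1)"
        using W X0 by (simp add: ennreal_mult)
      have e2: "ennreal (W * (1 + 2 ^ q)) + ennreal (W * 4 ^ q * X z1) = ennreal (W * (1 + 2 ^ q) + W * 4 ^ q * X z1)"
        using W X0 by (simp add: ennreal_plus)
      show ?thesis unfolding e1 e2 using le by (rule ennreal_leI)
    qed
    have mX: "(\<lambda>z1. ennreal (X z1)) \<in> borel_measurable (\<psi> \<eta> z)"
      unfolding X_def measurable_cong_sets[OF kp(2) refl] by measurable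
    have "(\<integral>\<^sup>+z1. ennreal (1 + norm z1 ^ q) \<partial>\<psi> \<eta> z)
        \<le> (\<integral>\<^sup>+z1. ennreal (W * (1 + 2 ^ q)) + ennreal (W * 4 ^ q) * ennreal (X z1) \<partial>\<psi> \<eta> z)"
      by (intro nn_integral_mono pw)
    also have "\<dots> = ennreal (W * (1 + 2 ^ q)) + ennreal (W * 4 ^ q) * (\<integral>\<^sup>+z1. ennreal (X z1) \<partial>\<psi> \<eta> z)"
      using mX by (simp add: nn_integral_add nn_integral_cmult emeasure_space_1)
    also have "\<dots> \<le> ennreal (W * (1 + 2 ^ q)) + ennreal (W * 4 ^ q) * ennreal (max Bq 0)"
    proof -
      have "(\<integral>\<^sup>+z1. ennreal (X z1) \<partial>\<psi> \<eta> z) \<le> ennreal Bq" using Bq \<eta> unfolding X_def by auto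
      also have "\<dots> \<le> ennreal (max Bq 0)" by (intro ennreal_leI) auto
      finally show ?thesis by (intro add_mono mult_left_mono) auto
    qed
    also have "\<dots> = ennreal (B * W)"
    proof -
      have M0: "0 \<le> max Bq 0" by simp
      have e1: "ennreal (W * 4 ^ q) * ennreal (max Bq 0) = ennreal (W * 4 ^ q * max Bq 0)"
        using W M0 by (simp add: ennreal_mult)
      have e2: "ennreal (W * (1 + 2 ^ q)) + ennreal (W * 4 ^ q * max Bq 0) = ennreal (W * (1 + 2 ^ q) + W * 4 ^ q * max Bq 0)"
        using W M0 by (simp add: ennreal_plus)
      have e3: "W * (1 + 2 ^ q) + W * 4 ^ q * max Bq 0 = B * W" by (simp add: B_def algebra_simps)
      show ?thesis unfolding e1 e2 e3 ..
    qed
    finally show ?thesis by (simp add: W_def)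
  qed
  moreover have "min \<eta>0 1 > 0" using e0 by simp
  moreover have "B \<ge> 0" by (simp add: B_def)
  ultimately show ?thesis by blast
qed


lemma wq_meas: "(\<lambda>z1::'a::euclidean_space. ennreal (1 + norm z1 ^ q)) \<in> borel_measurable borel"
  by measurable

lemma run_moment:
  fixes k :: "nat \<Rightarrow> 'a::euclidean_space \<Rightarrow> 'a measure"
  assumes meas: "\<forall>i\<in>set is. k i \<in> borel \<rightarrow>\<^sub>M prob_algebra borel" and B: "B \<ge> 0"
    and mom: "\<forall>i\<in>set is. \<forall>z. (\<integral>\<^sup>+z1. ennreal (1 + norm z1 ^ q) \<partial>k i z) \<le> ennreal (B * (1 + norm z ^ q))"
  shows "(\<integral>\<^sup>+z1. ennreal (1 + norm z1 ^ q) \<partial>run k is z) \<le> ennreal (B ^ length is * (1 + norm z ^ q))"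
  using meas mom
proof (induction "is" arbitrary: z)
  case Nil
  have "(\<integral>\<^sup>+z1. ennreal (1 + norm z1 ^ q) \<partial>return borel z) = ennreal (1 + norm z ^ q)"
    by (rule nn_integral_return) (auto intro: wq_meas)
  then show ?case by simp
next
  case (Cons i "is")
  have ki: "k i \<in> borel \<rightarrow>\<^sub>M prob_algebra borel" using Cons.prems by auto
  note kp = kernel_prob[OF ki, of z]
  have rm: "run k is \<in> borel \<rightarrow>\<^sub>M prob_algebra borel" using Cons.prems by (intro run_meas) auto
  have N: "run k is \<in> k i z \<rightarrow>\<^sub>M subprob_algebra borel"
    unfolding measurable_cong_sets[OF kp(2) refl] by (rule measurable_prob_algebraD[OF rm])
  have wm: "(\<lambda>z1. ennreal (1 + norm z1 ^ q)) \<in> borel_measurable (k i z)"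
    using wq_meas measurable_cong_sets[OF kp(2) refl] by blast
  have IH: "\<And>y. (\<integral>\<^sup>+z1. ennreal (1 + norm z1 ^ q) \<partial>run k is y) \<le> ennreal (B ^ length is * (1 + norm y ^ q))"
    using Cons by auto
  have "(\<integral>\<^sup>+z1. ennreal (1 + norm z1 ^ q) \<partial>run k (i # is) z)
      = (\<integral>\<^sup>+y. (\<integral>\<^sup>+z1. ennreal (1 + norm z1 ^ q) \<partial>run k is y) \<partial>k i z)"
    unfolding run.simps by (rule nn_integral_bind[OF wq_meas N])
  also have "\<dots> \<le> (\<integral>\<^sup>+y. ennreal (B ^ length is) * ennreal (1 + norm y ^ q) \<partial>k i z)"
  proof (rule nn_integral_mono)
    fix y :: 'a
    have "ennreal (B ^ length is * (1 + norm y ^ q)) = ennreal (B ^ length is) * ennreal (1 + norm y ^ q)"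
      using B by (simp add: ennreal_mult)
    then show "(\<integral>\<^sup>+z1. ennreal (1 + norm z1 ^ q) \<partial>run k is y) \<le> ennreal (B ^ length is) * ennreal (1 + norm y ^ q)"
      using IH[of y] by simp
  qed
  also have "\<dots> = ennreal (B ^ length is) * (\<integral>\<^sup>+y. ennreal (1 + norm y ^ q) \<partial>k i z)"
    by (rule nn_integral_cmult[OF wm])
  also have "\<dots> \<le> ennreal (B ^ length is) * ennreal (B * (1 + norm z ^ q))"
    using Cons.prems by (intro mult_left_mono) auto
  also have "\<dots> = ennreal (B ^ length (i # is) * (1 + norm z ^ q))"
    using B by (simp add: ennreal_mult[symmetric] mult_ac)
  finally show ?case .
qed

lemma finite_unif:
  assumes "finite S" and "\<forall>i\<in>S. \<exists>B e. e > 0 \<and> B \<ge> (0::real) \<and> P i B (e::real)"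
    and mono: "\<And>i B B' e e'. P i B e \<Longrightarrow> B \<le> B' \<Longrightarrow> 0 < e' \<Longrightarrow> e' \<le> e \<Longrightarrow> P i B' e'"
  shows "\<exists>B e. e > 0 \<and> B \<ge> 0 \<and> (\<forall>i\<in>S. P i B e)"
  using assms(1,2)
proof (induction S rule: finite_induct)
  case empty then show ?case by (intro exI[of _ 0] exI[of _ 1]) auto
next
  case (insert i S)
  obtain B1 e1 where 1: "e1 > 0" "B1 \<ge> 0" "\<forall>j\<in>S. P j B1 e1" using insert by auto
  obtain B2 e2 where 2: "e2 > 0" "B2 \<ge> 0" "P i B2 e2" using insert.prems by auto
  have "\<forall>j\<in>insert i S. P j (max B1 B2) (min e1 e2)"
    using 1 2 mono[of i B2 e2 "max B1 B2" "min e1 e2"] mono[of _ B1 e1 "max B1 B2" "min e1 e2"] by auto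
  moreover have "min e1 e2 > 0" "max B1 B2 \<ge> 0" using 1 2 by auto
  ultimately show ?case by blast
qed

lemma integrable_wq:
  fixes f :: "'a::euclidean_space \<Rightarrow> real"
  assumes sM: "sets M = sets borel" and f: "f \<in> borel_measurable borel"
    and fb: "\<forall>z. \<bar>f z\<bar> \<le> Bf * (1 + norm z ^ q)" and Bf: "Bf \<ge> 0" and C: "C \<ge> 0"
    and mom: "(\<integral>\<^sup>+z. ennreal (1 + norm z ^ q) \<partial>M) \<le> ennreal C"
  shows "integrable M f" and "\<bar>\<integral>z. f z \<partial>M\<bar> \<le> Bf * C"
proof -
  have fM: "f \<in> borel_measurable M" using f measurable_cong_sets[OF sM refl] by blast
  have wm: "(\<lambda>z1. ennreal (1 + norm z1 ^ q)) \<in> borel_measurable M"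
    using wq_meas measurable_cong_sets[OF sM refl] by blast
  have "(\<integral>\<^sup>+z. ennreal (norm (f z)) \<partial>M) \<le> (\<integral>\<^sup>+z. ennreal Bf * ennreal (1 + norm z ^ q) \<partial>M)"
  proof (rule nn_integral_mono)
    fix z
    have "ennreal (norm (f z)) \<le> ennreal (Bf * (1 + norm z ^ q))" using fb by (intro ennreal_leI) auto
    then show "ennreal (norm (f z)) \<le> ennreal Bf * ennreal (1 + norm z ^ q)" using Bf by (simp add: ennreal_mult)
  qed
  also have "\<dots> = ennreal Bf * (\<integral>\<^sup>+z. ennreal (1 + norm z ^ q) \<partial>M)"
    by (rule nn_integral_cmult[OF wm])
  also have "\<dots> \<le> ennreal Bf * ennreal C" using mom by (intro mult_left_mono) auto
  also have "\<dots> = ennreal (Bf * C)" using Bf C by (simp add: ennreal_mult)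
  finally have le: "(\<integral>\<^sup>+z. ennreal (norm (f z)) \<partial>M) \<le> ennreal (Bf * C)" .
  then have "(\<integral>\<^sup>+z. ennreal (norm (f z)) \<partial>M) < \<infinity>" using le_less_trans by fastforce
  then show int: "integrable M f" using fM by (intro integrableI_bounded) auto
  have "ennreal (norm (\<integral>z. f z \<partial>M)) \<le> (\<integral>\<^sup>+z. ennreal (norm (f z)) \<partial>M)"
    by (rule integral_norm_bound_ennreal[OF int])
  also note le
  finally show "\<bar>\<integral>z. f z \<partial>M\<bar> \<le> Bf * C" using Bf C by (simp add: ennreal_le_iff)
qed

lemma test_fun_meas: "test_fun f \<Longrightarrow> f \<in> borel_measurable borel"
  by (intro borel_measurable_continuous_onI continuous_at_imp_continuous_on ballI
      differentiable_imp_continuous_within test_fun_diff)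

lemma good_step_meas: "good_step \<psi> \<Longrightarrow> \<eta> > 0 \<Longrightarrow> \<psi> \<eta> \<in> borel \<rightarrow>\<^sub>M prob_algebra borel"
  unfolding good_step_def by blast

lemma step_integrate:
  fixes \<psi> :: "real \<Rightarrow> 'a::euclidean_space \<Rightarrow> 'a measure" and R :: "real \<Rightarrow> 'a \<Rightarrow> real"
  assumes gs: "good_step \<psi>" and e: "e > 0"
    and Rm: "\<forall>\<eta>\<in>{0<..e}. R \<eta> \<in> borel_measurable borel"
    and Rb: "\<forall>\<eta>\<in>{0<..e}. \<forall>y. \<bar>R \<eta> y\<bar> \<le> C * (1 + norm y ^ q) * g \<eta>"
    and C: "C \<ge> 0" and g: "\<forall>\<eta>>0. g \<eta> \<ge> 0"
  shows "\<exists>B e'. e' > 0 \<and> B \<ge> 0 \<and> (\<forall>\<eta>\<in>{0<..e'}. \<forall>z. integrable (\<psi> \<eta> z) (R \<eta>) \<and>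
            \<bar>\<integral>y. R \<eta> y \<partial>\<psi> \<eta> z\<bar> \<le> C * B * (1 + norm z ^ q) * g \<eta>)"
proof -
  obtain B em where em: "em > 0" "B \<ge> 0" and mom: "\<forall>\<eta>\<in>{0<..em}. \<forall>z.
           (\<integral>\<^sup>+z1. ennreal (1 + norm z1 ^ q) \<partial>\<psi> \<eta> z) \<le> ennreal (B * (1 + norm z ^ q))"
    using step_moment[OF gs, of q] by blast
  have "integrable (\<psi> \<eta> z) (R \<eta>) \<and> \<bar>\<integral>y. R \<eta> y \<partial>\<psi> \<eta> z\<bar> \<le> C * B * (1 + norm z ^ q) * g \<eta>"
    if \<eta>: "\<eta> \<in> {0<..min e em}" for \<eta> z
  proof -
    have sM: "sets (\<psi> \<eta> z) = sets borel" using kernel_prob(2)[OF good_step_meas[OF gs]] \<eta> by auto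
    have gn: "g \<eta> \<ge> 0" using g \<eta> by auto
    have rb: "\<forall>y. \<bar>R \<eta> y\<bar> \<le> (C * g \<eta>) * (1 + norm y ^ q)" using Rb \<eta> by (auto simp: mult_ac)
    have mo: "(\<integral>\<^sup>+z1. ennreal (1 + norm z1 ^ q) \<partial>\<psi> \<eta> z) \<le> ennreal (B * (1 + norm z ^ q))"
      using mom \<eta> by auto
    have Bw: "B * (1 + norm z ^ q) \<ge> 0" using em by (intro mult_nonneg_nonneg add_nonneg_nonneg) auto
    note iw = integrable_wq[OF sM _ rb _ Bw mo]
    have rm: "R \<eta> \<in> borel_measurable borel" using Rm \<eta> by auto
    have Cg: "C * g \<eta> \<ge> 0" using C gn by simp
    from iw(1)[OF rm Cg] iw(2)[OF rm Cg] show ?thesis by (simp add: mult_ac)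
  qed
  moreover have "min e em > 0" using e em by simp
  ultimately show ?thesis using em(2) by blast
qed

lemma run_integrate:
  fixes \<psi> :: "nat \<Rightarrow> real \<Rightarrow> 'a::euclidean_space \<Rightarrow> 'a measure"
  assumes gs: "\<forall>i\<in>set is. good_step (\<psi> i)" and pf: "pb f" and fm: "f \<in> borel_measurable borel"
  shows "\<exists>C e q. e > 0 \<and> C \<ge> 0 \<and> (\<forall>\<eta>\<in>{0<..e}. \<forall>z. integrable (run (\<lambda>i. \<psi> i \<eta>) is z) f \<and>
           \<bar>\<integral>y. f y \<partial>run (\<lambda>i. \<psi> i \<eta>) is z\<bar> \<le> C * (1 + norm z ^ q))"
proof -
  obtain Bf q where Bf: "\<forall>z. \<bar>f z\<bar> \<le> Bf * (1 + norm z ^ q)" using pf pb_def by blast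
  have Bf0: "Bf \<ge> 0" using Bf pb_nonneg_B by blast
  have "\<exists>B e. e > 0 \<and> B \<ge> 0 \<and> (\<forall>i\<in>set is. \<forall>\<eta>\<in>{0<..e}. \<forall>z.
          (\<integral>\<^sup>+z1. ennreal (1 + norm z1 ^ q) \<partial>\<psi> i \<eta> z) \<le> ennreal (B * (1 + norm z ^ q)))"
  proof (rule finite_unif[where P="\<lambda>i B e. \<forall>\<eta>\<in>{0<..e}. \<forall>z.
          (\<integral>\<^sup>+z1. ennreal (1 + norm z1 ^ q) \<partial>\<psi> i \<eta> z) \<le> ennreal (B * (1 + norm z ^ q))"])
    show "finite (set is)" by simp
    show "\<forall>i\<in>set is. \<exists>B e. e > 0 \<and> B \<ge> 0 \<and> (\<forall>\<eta>\<in>{0<..e}. \<forall>z.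
          (\<integral>\<^sup>+z1. ennreal (1 + norm z1 ^ q) \<partial>\<psi> i \<eta> z) \<le> ennreal (B * (1 + norm z ^ q)))"
      using gs step_moment by blast
  next
    fix i B B' and e e' :: real
    assume h: "\<forall>\<eta>\<in>{0<..e}. \<forall>z. (\<integral>\<^sup>+z1. ennreal (1 + norm z1 ^ q) \<partial>\<psi> i \<eta> z) \<le> ennreal (B * (1 + norm z ^ q))"
      and "B \<le> B'" "0 < e'" "e' \<le> e"
    then show "\<forall>\<eta>\<in>{0<..e'}. \<forall>z. (\<integral>\<^sup>+z1. ennreal (1 + norm z1 ^ q) \<partial>\<psi> i \<eta> z) \<le> ennreal (B' * (1 + norm z ^ q))"
    proof (intro ballI allI)
      fix \<eta> z assume "\<eta> \<in> {0<..e'}"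
      then have "(\<integral>\<^sup>+z1. ennreal (1 + norm z1 ^ q) \<partial>\<psi> i \<eta> z) \<le> ennreal (B * (1 + norm z ^ q))"
        using h \<open>e' \<le> e\<close> by auto
      also have "\<dots> \<le> ennreal (B' * (1 + norm z ^ q))"
        using \<open>B \<le> B'\<close> by (intro ennreal_leI mult_right_mono) auto
      finally show "(\<integral>\<^sup>+z1. ennreal (1 + norm z1 ^ q) \<partial>\<psi> i \<eta> z) \<le> ennreal (B' * (1 + norm z ^ q))" .
    qed
  qed
  then obtain B e where e: "e > 0" "B \<ge> 0" and mom: "\<forall>i\<in>set is. \<forall>\<eta>\<in>{0<..e}. \<forall>z.
          (\<integral>\<^sup>+z1. ennreal (1 + norm z1 ^ q) \<partial>\<psi> i \<eta> z) \<le> ennreal (B * (1 + norm z ^ q))" by blast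
  have "integrable (run (\<lambda>i. \<psi> i \<eta>) is z) f \<and>
           \<bar>\<integral>y. f y \<partial>run (\<lambda>i. \<psi> i \<eta>) is z\<bar> \<le> (Bf * B ^ length is) * (1 + norm z ^ q)"
    if \<eta>: "\<eta> \<in> {0<..e}" for \<eta> z
  proof -
    have km: "\<forall>i\<in>set is. \<psi> i \<eta> \<in> borel \<rightarrow>\<^sub>M prob_algebra borel"
      using gs \<eta> good_step_meas by auto
    have sM: "sets (run (\<lambda>i. \<psi> i \<eta>) is z) = sets borel"
      using kernel_prob(2)[OF run_meas[OF km]] by simp
    have mo: "(\<integral>\<^sup>+z1. ennreal (1 + norm z1 ^ q) \<partial>run (\<lambda>i. \<psi> i \<eta>) is z) \<le> ennreal (B ^ length is * (1 + norm z ^ q))"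
      using run_moment[of "is" "\<lambda>i. \<psi> i \<eta>" B q z] km e mom \<eta> by auto
    have Bw: "B ^ length is * (1 + norm z ^ q) \<ge> 0" using e by (intro mult_nonneg_nonneg add_nonneg_nonneg) auto
    note iw = integrable_wq[OF sM fm Bf Bf0 Bw mo]
    then show ?thesis by (simp add: mult_ac)
  qed
  moreover have "Bf * B ^ length is \<ge> 0" using Bf0 e by simp
  ultimately show ?thesis using e(1) by blast
qed

lemma tri_sum:
  fixes g :: "nat \<Rightarrow> nat \<Rightarrow> 'b::comm_monoid_add"
  shows "(\<Sum>k\<le>n. \<Sum>a\<le>n - k. g a k) = (\<Sum>m\<le>n. \<Sum>a\<le>m. g a (m - a))"
proof -
  have "(\<Sum>k\<le>n. \<Sum>a\<le>n - k. g a k) = (\<Sum>(k, a)\<in>Sigma {..n} (\<lambda>k. {..n - k}). g a k)"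
    by (rule sum.Sigma) auto
  also have "\<dots> = (\<Sum>(m, a)\<in>Sigma {..n} (\<lambda>m. {..m}). g a (m - a))"
    by (rule sum.reindex_bij_witness[where i="\<lambda>(m, a). (m - a, a)" and j="\<lambda>(k, a). (k + a, a)"]) auto
  also have "\<dots> = (\<Sum>m\<le>n. \<Sum>a\<le>m. g a (m - a))"
    by (rule sum.Sigma[symmetric]) auto
  finally show ?thesis .
qed


fun Gc :: "(nat \<Rightarrow> ('a \<Rightarrow> real) \<Rightarrow> ('a \<Rightarrow> real)) \<Rightarrow> real \<Rightarrow> ('a \<Rightarrow> real) \<Rightarrow> nat list \<Rightarrow> nat \<Rightarrow> 'a \<Rightarrow> real" where
  "Gc L \<kappa> \<phi> [] k = (if k = 0 then \<phi> else (\<lambda>z. 0))"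
| "Gc L \<kappa> \<phi> (i # is) k = (\<lambda>z. \<Sum>a\<le>k. \<kappa> ^ a / fact a * ((L i) ^^ a) (Gc L \<kappa> \<phi> is (k - a)) z)"

lemma Gc_test:
  fixes L :: "nat \<Rightarrow> ('a::real_normed_vector \<Rightarrow> real) \<Rightarrow> ('a \<Rightarrow> real)"
  assumes \<phi>: "test_fun \<phi>" and Lt: "\<forall>i\<in>I. \<forall>f. test_fun f \<longrightarrow> test_fun (L i f)"
  shows "set is \<subseteq> I \<Longrightarrow> test_fun (Gc L \<kappa> \<phi> is k)"
proof (induction "is" arbitrary: k)
  case Nil then show ?case using \<phi> by (simp add: test_fun_const)
next
  case (Cons i "is")
  have iI: "i \<in> I" using Cons.prems by simp
  have t: "test_fun ((L i ^^ a) (Gc L \<kappa> \<phi> is (k - a)))" for a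
    by (rule test_fun_funpow) (use Lt iI Cons in auto)
  have "test_fun (\<lambda>z. \<kappa> ^ a / fact a * (L i ^^ a) (Gc L \<kappa> \<phi> is (k - a)) z)" for a
    by (rule test_fun_cmult[OF t])
  then have "\<forall>a\<in>{..k}. test_fun (\<lambda>z. \<kappa> ^ a / fact a * (L i ^^ a) (Gc L \<kappa> \<phi> is (k - a)) z)"
    by blast
  then show ?case by (simp only: Gc.simps) (rule test_fun_sum, auto)
qed

lemma weak_O_term:
  assumes "pb f" "m \<le> k + a"
  shows "weak_O (\<lambda>\<eta> z. \<eta> ^ k * ((\<eta> * \<kappa>) ^ a / fact a * f z)) (\<lambda>\<eta>. \<eta> ^ m)"
proof -
  have "pb (\<lambda>z. \<kappa> ^ a / fact a * f z)" using assms(1) by (intro pb_mult pb_const)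
  from weak_O_pow_term[OF this assms(2)]
  have w: "weak_O (\<lambda>\<eta> z. \<eta> ^ (k + a) * (\<kappa> ^ a / fact a * f z)) (\<lambda>\<eta>. \<eta> ^ m)" .
  have "\<eta> ^ (k + a) * (\<kappa> ^ a / fact a * f z) = \<eta> ^ k * ((\<eta> * \<kappa>) ^ a / fact a * f z)" for \<eta> z
    by (simp add: power_add power_mult_distrib)
  then show ?thesis by (intro weak_O_cong[OF w, of 1]) auto
qed

lemma expand_algebra:
  fixes X :: "nat \<Rightarrow> nat \<Rightarrow> real" and D :: "nat \<Rightarrow> real"
  assumes np: "n \<le> p"
  shows "(\<Sum>k\<le>n. \<eta> ^ k * (D k + (\<Sum>a\<le>p. (\<eta> * \<kappa>) ^ a / fact a * X a k)))
       = (\<Sum>k\<le>n. \<eta> ^ k * D k)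
       + (\<Sum>k\<le>n. \<Sum>a\<in>{n - k<..p}. \<eta> ^ k * ((\<eta> * \<kappa>) ^ a / fact a * X a k))
       + (\<Sum>m\<le>n. \<eta> ^ m * (\<Sum>a\<le>m. \<kappa> ^ a / fact a * X a (m - a)))"
proof -
  have split: "(\<Sum>a\<le>p. h a) = (\<Sum>a\<le>n - k. h a) + (\<Sum>a\<in>{n - k<..p}. h a)" for h :: "nat \<Rightarrow> real" and k
  proof -
    have "{..p} = {..n - k} \<union> {n - k<..p}" using np by auto
    moreover have "sum h ({..n - k} \<union> {n - k<..p}) = sum h {..n - k} + sum h {n - k<..p}"
      by (rule sum.union_disjoint) auto
    ultimately show ?thesis by simp
  qed
  have "(\<Sum>k\<le>n. \<eta> ^ k * (D k + (\<Sum>a\<le>p. (\<eta> * \<kappa>) ^ a / fact a * X a k)))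
      = (\<Sum>k\<le>n. \<eta> ^ k * D k + (\<Sum>a\<in>{n - k<..p}. \<eta> ^ k * ((\<eta> * \<kappa>) ^ a / fact a * X a k))
            + (\<Sum>a\<le>n - k. \<eta> ^ k * ((\<eta> * \<kappa>) ^ a / fact a * X a k)))"
  proof (rule sum.cong[OF refl])
    fix k
    show "\<eta> ^ k * (D k + (\<Sum>a\<le>p. (\<eta> * \<kappa>) ^ a / fact a * X a k))
      = \<eta> ^ k * D k + (\<Sum>a\<in>{n - k<..p}. \<eta> ^ k * ((\<eta> * \<kappa>) ^ a / fact a * X a k))
            + (\<Sum>a\<le>n - k. \<eta> ^ k * ((\<eta> * \<kappa>) ^ a / fact a * X a k))"
      unfolding split[of "\<lambda>a. (\<eta> * \<kappa>) ^ a / fact a * X a k" k] distrib_left sum_distrib_left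
      by (simp only: add_ac)
  qed
  also have "\<dots> = (\<Sum>k\<le>n. \<eta> ^ k * D k) + (\<Sum>k\<le>n. \<Sum>a\<in>{n - k<..p}. \<eta> ^ k * ((\<eta> * \<kappa>) ^ a / fact a * X a k))
            + (\<Sum>k\<le>n. \<Sum>a\<le>n - k. \<eta> ^ k * ((\<eta> * \<kappa>) ^ a / fact a * X a k))"
    by (simp only: sum.distrib)
  also have "(\<Sum>k\<le>n. \<Sum>a\<le>n - k. \<eta> ^ k * ((\<eta> * \<kappa>) ^ a / fact a * X a k))
      = (\<Sum>m\<le>n. \<Sum>a\<le>m. \<eta> ^ (m - a) * ((\<eta> * \<kappa>) ^ a / fact a * X a (m - a)))"
    by (rule tri_sum)
  also have "\<dots> = (\<Sum>m\<le>n. \<eta> ^ m * (\<Sum>a\<le>m. \<kappa> ^ a / fact a * X a (m - a)))"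
  proof (rule sum.cong[OF refl])
    fix m assume "m \<in> {..n}"
    have "\<eta> ^ (m - a) * ((\<eta> * \<kappa>) ^ a / fact a * X a (m - a)) = \<eta> ^ m * (\<kappa> ^ a / fact a * X a (m - a))"
      if "a \<le> m" for a
    proof -
      have "\<eta> ^ m = \<eta> ^ (m - a) * \<eta> ^ a" using that by (simp flip: power_add)
      then show ?thesis by (simp add: power_mult_distrib)
    qed
    then have "(\<Sum>a\<le>m. \<eta> ^ (m - a) * ((\<eta> * \<kappa>) ^ a / fact a * X a (m - a)))
        = (\<Sum>a\<le>m. \<eta> ^ m * (\<kappa> ^ a / fact a * X a (m - a)))"
      by (intro sum.cong[OF refl]) auto
    then show "(\<Sum>a\<le>m. \<eta> ^ (m - a) * ((\<eta> * \<kappa>) ^ a / fact a * X a (m - a)))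
        = \<eta> ^ m * (\<Sum>a\<le>m. \<kappa> ^ a / fact a * X a (m - a))"
      by (simp only: sum_distrib_left)
  qed
  finally show ?thesis .
qed

lemma expansion:
  fixes \<psi> :: "nat \<Rightarrow> real \<Rightarrow> 'a::euclidean_space \<Rightarrow> 'a measure"
    and L :: "nat \<Rightarrow> ('a \<Rightarrow> real) \<Rightarrow> ('a \<Rightarrow> real)"
  assumes gs: "\<forall>i\<in>I. good_step (\<psi> i)"
    and Lt: "\<forall>i\<in>I. \<forall>f. test_fun f \<longrightarrow> test_fun (L i f)"
    and hyp: "\<forall>i\<in>I. \<forall>f. test_fun f \<longrightarrow>
        weak_O (\<lambda>\<eta> z. (\<integral>z1. f z1 \<partial>\<psi> i \<eta> z) - texp p (\<eta> * \<kappa>) (L i) f z) (\<lambda>\<eta>. \<eta> ^ (p + 1))"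
    and np: "n \<le> p" and \<phi>: "test_fun \<phi>"
  shows "set is \<subseteq> I \<Longrightarrow> weak_O (\<lambda>\<eta> z. (\<integral>z1. \<phi> z1 \<partial>run (\<lambda>i. \<psi> i \<eta>) is z)
             - (\<Sum>k\<le>n. \<eta> ^ k * Gc L \<kappa> \<phi> is k z)) (\<lambda>\<eta>. \<eta> ^ (n + 1))"
proof (induction "is")
  case Nil
  have \<phi>m: "\<phi> \<in> borel_measurable borel" using \<phi> by (rule test_fun_meas)
  have "(\<integral>z1. \<phi> z1 \<partial>run (\<lambda>i. \<psi> i \<eta>) [] z) - (\<Sum>k\<le>n. \<eta> ^ k * Gc L \<kappa> \<phi> [] k z) = 0" for \<eta> z
  proof -
    have "(\<integral>z1. \<phi> z1 \<partial>run (\<lambda>i. \<psi> i \<eta>) [] z) = \<phi> z"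
      using \<phi>m by (simp add: integral_return)
    moreover have "(\<Sum>k\<le>n. \<eta> ^ k * Gc L \<kappa> \<phi> [] k z) = (\<Sum>k\<le>n. if k = 0 then \<phi> z else 0)"
      by (rule sum.cong) auto
    moreover have "(\<Sum>k\<le>n. if k = 0 then \<phi> z else 0) = \<phi> z" by (simp add: sum.delta)
    ultimately show ?thesis by simp
  qed
  then show ?case by (intro weak_O_cong[OF weak_O_zero, of 1]) auto
next
  case (Cons i "is")
  have iI: "i \<in> I" and isI: "set is \<subseteq> I" using Cons.prems by auto
  have gsi: "good_step (\<psi> i)" using gs iI by auto
  have gsis: "\<forall>j\<in>set is. good_step (\<psi> j)" using gs isI by auto
  have gsiis: "\<forall>j\<in>set (i # is). good_step (\<psi> j)" using gs Cons.prems by auto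
  have g0: "\<forall>\<eta>>0. 0 \<le> (\<eta>::real) ^ (n + 1)" by simp
  define F where "F \<eta> y = (\<integral>z1. \<phi> z1 \<partial>run (\<lambda>i. \<psi> i \<eta>) is y)" for \<eta> y
  define G where "G k = Gc L \<kappa> \<phi> is k" for k
  define Rr where "Rr \<eta> y = F \<eta> y - (\<Sum>k\<le>n. \<eta> ^ k * G k y)" for \<eta> y
  have Gt: "test_fun (G k)" for k unfolding G_def using Gc_test[OF \<phi> Lt isI] .
  have Gm: "G k \<in> borel_measurable borel" for k using Gt by (rule test_fun_meas)
  have \<phi>m: "\<phi> \<in> borel_measurable borel" using \<phi> by (rule test_fun_meas)
  have IH: "weak_O Rr (\<lambda>\<eta>. \<eta> ^ (n + 1))"
    using Cons.IH isI unfolding Rr_def F_def G_def by simp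
  obtain C1 q1 e1 where e1: "e1 > 0" "e1 \<le> 1" "C1 \<ge> 0"
    and Rb: "\<forall>\<eta>\<in>{0<..e1}. \<forall>y. \<bar>Rr \<eta> y\<bar> \<le> C1 * (1 + norm y ^ q1) * \<eta> ^ (n + 1)"
    using weak_O_absC[OF IH g0] by blast
  have km: "\<eta> > 0 \<Longrightarrow> \<forall>j\<in>set is. \<psi> j \<eta> \<in> borel \<rightarrow>\<^sub>M prob_algebra borel" for \<eta>
    using gsis good_step_meas by blast
  have rmeas: "\<eta> > 0 \<Longrightarrow> run (\<lambda>i. \<psi> i \<eta>) is \<in> borel \<rightarrow>\<^sub>M prob_algebra borel" for \<eta>
    using km by (intro run_meas) auto
  have Fm: "\<eta> > 0 \<Longrightarrow> F \<eta> \<in> borel_measurable borel" for \<eta>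
  proof -
    assume "\<eta> > 0"
    from measurable_compose[OF measurable_prob_algebraD[OF rmeas[OF this]] integral_measurable_subprob_algebra[OF \<phi>m]]
    show ?thesis unfolding F_def[abs_def] by simp
  qed
  have Rm: "\<eta> > 0 \<Longrightarrow> Rr \<eta> \<in> borel_measurable borel" for \<eta>
  proof -
    assume "\<eta> > 0"
    note [measurable] = Fm[OF this] Gm
    show ?thesis unfolding Rr_def[abs_def] by measurable
  qed
  obtain B2 e2 where e2: "e2 > 0" "B2 \<ge> 0" and E1: "\<forall>\<eta>\<in>{0<..e2}. \<forall>z. integrable (\<psi> i \<eta> z) (Rr \<eta>) \<and>
            \<bar>\<integral>y. Rr \<eta> y \<partial>\<psi> i \<eta> z\<bar> \<le> C1 * B2 * (1 + norm z ^ q1) * \<eta> ^ (n + 1)"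
    using step_integrate[OF gsi e1(1) _ Rb e1(3) g0] Rm by auto
  have wE1: "weak_O (\<lambda>\<eta> z. \<integral>y. Rr \<eta> y \<partial>\<psi> i \<eta> z) (\<lambda>\<eta>. \<eta> ^ (n + 1))"
    by (rule weak_O_I[OF e2(1)]) (use E1 in auto)
  obtain C3 e3 q3 where e3: "e3 > 0" "C3 \<ge> 0" and F3: "\<forall>\<eta>\<in>{0<..e3}. \<forall>z. integrable (run (\<lambda>i. \<psi> i \<eta>) is z) \<phi> \<and>
           \<bar>\<integral>y. \<phi> y \<partial>run (\<lambda>i. \<psi> i \<eta>) is z\<bar> \<le> C3 * (1 + norm z ^ q3)"
    using run_integrate[OF gsis test_fun_pb[OF \<phi>] \<phi>m] by blast
  have Fb: "\<forall>\<eta>\<in>{0<..e3}. \<forall>y. \<bar>F \<eta> y\<bar> \<le> C3 * (1 + norm y ^ q3) * 1"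
    using F3 unfolding F_def by auto
  obtain B4 e4 where e4: "e4 > 0" and F4: "\<forall>\<eta>\<in>{0<..e4}. \<forall>z. integrable (\<psi> i \<eta> z) (F \<eta>)"
    using step_integrate[OF gsi e3(1) _ Fb e3(2)] Fm by auto
  obtain C5 e5 q5 where e5: "e5 > 0" and F5: "\<forall>\<eta>\<in>{0<..e5}. \<forall>z. integrable (run (\<lambda>i. \<psi> i \<eta>) (i # is) z) \<phi>"
    using run_integrate[OF gsiis test_fun_pb[OF \<phi>] \<phi>m] by blast
  have "\<exists>B e. e > 0 \<and> B \<ge> (0::real) \<and> (\<forall>k\<in>{..n}. \<forall>\<eta>\<in>{0<..e}. \<forall>z. integrable (\<psi> i \<eta> z) (G k))"
  proof (rule finite_unif[where P="\<lambda>k B e. \<forall>\<eta>\<in>{0<..e}. \<forall>z. integrable (\<psi> i \<eta> z) (G k)"])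
    show "finite {..n}" by simp
    show "\<forall>k\<in>{..n}. \<exists>B e. e > 0 \<and> B \<ge> (0::real) \<and> (\<forall>\<eta>\<in>{0<..e}. \<forall>z. integrable (\<psi> i \<eta> z) (G k))"
    proof
      fix k
      obtain Bk qk where Bk: "\<forall>y. \<bar>G k y\<bar> \<le> Bk * (1 + norm y ^ qk)"
        using test_fun_pb[OF Gt[of k]] pb_def by blast
      have Bk0: "Bk \<ge> 0" using Bk pb_nonneg_B by blast
      have Bk1: "\<forall>\<eta>\<in>{0<..1::real}. \<forall>y. \<bar>G k y\<bar> \<le> Bk * (1 + norm y ^ qk) * 1" using Bk by simp
      have si: "\<exists>B e'. e' > 0 \<and> B \<ge> 0 \<and> (\<forall>\<eta>\<in>{0<..e'}. \<forall>z. integrable (\<psi> i \<eta> z) (G k) \<and>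
            \<bar>\<integral>y. G k y \<partial>\<psi> i \<eta> z\<bar> \<le> Bk * B * (1 + norm z ^ qk) * 1)"
        by (rule step_integrate[OF gsi zero_less_one _ Bk1 Bk0]) (use Gm in auto)
      show "\<exists>B e. e > 0 \<and> B \<ge> (0::real) \<and> (\<forall>\<eta>\<in>{0<..e}. \<forall>z. integrable (\<psi> i \<eta> z) (G k))"
      proof -
        obtain B e' where "e' > 0" "B \<ge> 0" and h: "\<forall>\<eta>\<in>{0<..e'}. \<forall>z. integrable (\<psi> i \<eta> z) (G k) \<and>
            \<bar>\<integral>y. G k y \<partial>\<psi> i \<eta> z\<bar> \<le> Bk * B * (1 + norm z ^ qk) * 1"
          using si by blast
        have "\<forall>\<eta>\<in>{0<..e'}. \<forall>z. integrable (\<psi> i \<eta> z) (G k)" using h by blast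
        then show ?thesis using \<open>e' > 0\<close> \<open>B \<ge> 0\<close> by (intro exI[of _ B] exI[of _ e']) simp
      qed
    qed
  next
    fix k and B B' e e' :: real
    assume h: "\<forall>\<eta>\<in>{0<..e}. \<forall>z. integrable (\<psi> i \<eta> z) (G k)" and "e' \<le> e"
    show "\<forall>\<eta>\<in>{0<..e'}. \<forall>z. integrable (\<psi> i \<eta> z) (G k)"
    proof (intro ballI allI)
      fix \<eta> z assume "\<eta> \<in> {0<..e'}"
      then have "\<eta> \<in> {0<..e}" using \<open>e' \<le> e\<close> by simp
      then show "integrable (\<psi> i \<eta> z) (G k)" using h by blast
    qed
  qed
  then obtain B6 e6 where e6: "e6 > 0" and G6: "\<forall>k\<in>{..n}. \<forall>\<eta>\<in>{0<..e6}. \<forall>z. integrable (\<psi> i \<eta> z) (G k)"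
    by blast
  define D where "D k \<eta> z = (\<integral>z1. G k z1 \<partial>\<psi> i \<eta> z) - texp p (\<eta> * \<kappa>) (L i) (G k) z" for k \<eta> z
  have wD: "weak_O (D k) (\<lambda>\<eta>. \<eta> ^ (p + 1))" for k
    using hyp iI Gt unfolding D_def by blast
  have wE2: "weak_O (\<lambda>\<eta> z. \<Sum>k\<le>n. \<eta> ^ k * D k \<eta> z) (\<lambda>\<eta>. \<eta> ^ (n + 1))"
  proof (rule weak_O_sum[OF _ _ g0])
    show "finite {..n}" by simp
    show "\<forall>k\<in>{..n}. weak_O (\<lambda>\<eta> z. \<eta> ^ k * D k \<eta> z) (\<lambda>\<eta>. \<eta> ^ (n + 1))"
    proof
      fix k have "n + 1 \<le> k + (p + 1)" using np by simp
      then show "weak_O (\<lambda>\<eta> z. \<eta> ^ k * D k \<eta> z) (\<lambda>\<eta>. \<eta> ^ (n + 1))"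
        by (rule weak_O_mult_pow[OF wD[of k]])
    qed
  qed
  define X where "X a k z = ((L i) ^^ a) (G k) z" for a k z
  have wE3: "weak_O (\<lambda>\<eta> z. \<Sum>k\<le>n. \<Sum>a\<in>{n - k<..p}. \<eta> ^ k * ((\<eta> * \<kappa>) ^ a / fact a * X a k z))
                  (\<lambda>\<eta>. \<eta> ^ (n + 1))"
  proof (rule weak_O_sum[OF _ _ g0], simp, rule ballI, rule weak_O_sum[OF _ _ g0], simp, rule ballI)
    fix k a assume k: "k \<in> {..n}" and a: "a \<in> {n - k<..p}"
    have "pb (X a k)" unfolding X_def
      by (rule test_fun_pb, rule test_fun_funpow) (use Lt iI Gt in auto)
    moreover have "n + 1 \<le> k + a" using k a by auto
    ultimately show "weak_O (\<lambda>\<eta> z. \<eta> ^ k * ((\<eta> * \<kappa>) ^ a / fact a * X a k z)) (\<lambda>\<eta>. \<eta> ^ (n + 1))"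
      by (rule weak_O_term)
  qed
  have wAll: "weak_O (\<lambda>\<eta> z. (\<integral>y. Rr \<eta> y \<partial>\<psi> i \<eta> z) + (\<Sum>k\<le>n. \<eta> ^ k * D k \<eta> z)
       + (\<Sum>k\<le>n. \<Sum>a\<in>{n - k<..p}. \<eta> ^ k * ((\<eta> * \<kappa>) ^ a / fact a * X a k z))) (\<lambda>\<eta>. \<eta> ^ (n + 1))"
    by (intro weak_O_add wE1 wE2 wE3 g0)
  define es where "es = min e2 (min e4 (min e5 (min e6 e3)))"
  have es: "es > 0" using e2 e3 e4 e5 e6 by (simp add: es_def)
  show ?case
  proof (rule weak_O_cong[OF wAll es], intro ballI allI)
    fix \<eta> z assume \<eta>: "\<eta> \<in> {0<..es}"
    have \<eta>0: "\<eta> > 0" using \<eta> by simp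
    have kpi: "\<psi> i \<eta> \<in> borel \<rightarrow>\<^sub>M prob_algebra borel" using good_step_meas[OF gsi \<eta>0] .
    note kp = kernel_prob[OF kpi, of z]
    have N: "run (\<lambda>i. \<psi> i \<eta>) is \<in> \<psi> i \<eta> z \<rightarrow>\<^sub>M subprob_algebra borel"
      unfolding measurable_cong_sets[OF kp(2) refl] by (rule measurable_prob_algebraD[OF rmeas[OF \<eta>0]])
    have intB: "integrable (\<psi> i \<eta> z \<bind> run (\<lambda>i. \<psi> i \<eta>) is) \<phi>"
      using F5 \<eta> unfolding es_def by auto
    have intN: "\<forall>y\<in>space (\<psi> i \<eta> z). integrable (run (\<lambda>i. \<psi> i \<eta>) is y) \<phi>"
      using F3 \<eta> unfolding es_def by auto
    have step1: "(\<integral>z1. \<phi> z1 \<partial>run (\<lambda>i. \<psi> i \<eta>) (i # is) z) = (\<integral>y. F \<eta> y \<partial>\<psi> i \<eta> z)"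
      unfolding run.simps F_def by (rule integral_bind_real[OF N \<phi>m intB intN])
    have iF: "integrable (\<psi> i \<eta> z) (F \<eta>)" using F4 \<eta> unfolding es_def by auto
    have iG: "\<forall>k\<in>{..n}. integrable (\<psi> i \<eta> z) (G k)" using G6 \<eta> unfolding es_def by auto
    have iGs: "integrable (\<psi> i \<eta> z) (\<lambda>y. \<Sum>k\<le>n. \<eta> ^ k * G k y)"
      by (rule Bochner_Integration.integrable_sum) (use iG in \<open>auto intro: integrable_mult_right\<close>)
    have step2: "(\<integral>y. F \<eta> y \<partial>\<psi> i \<eta> z) = (\<integral>y. Rr \<eta> y \<partial>\<psi> i \<eta> z) + (\<Sum>k\<le>n. \<eta> ^ k * (\<integral>y. G k y \<partial>\<psi> i \<eta> z))"
    proof -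
      have "(\<integral>y. F \<eta> y \<partial>\<psi> i \<eta> z) = (\<integral>y. Rr \<eta> y + (\<Sum>k\<le>n. \<eta> ^ k * G k y) \<partial>\<psi> i \<eta> z)"
        unfolding Rr_def by simp
      also have "\<dots> = (\<integral>y. Rr \<eta> y \<partial>\<psi> i \<eta> z) + (\<integral>y. (\<Sum>k\<le>n. \<eta> ^ k * G k y) \<partial>\<psi> i \<eta> z)"
      proof (rule Bochner_Integration.integral_add)
        show "integrable (\<psi> i \<eta> z) (Rr \<eta>)" using E1 \<eta> unfolding es_def by auto
      qed (rule iGs)
      also have "(\<integral>y. (\<Sum>k\<le>n. \<eta> ^ k * G k y) \<partial>\<psi> i \<eta> z) = (\<Sum>k\<le>n. \<integral>y. \<eta> ^ k * G k y \<partial>\<psi> i \<eta> z)"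
        using iG by (intro Bochner_Integration.integral_sum integrable_mult_right) auto
      also have "\<dots> = (\<Sum>k\<le>n. \<eta> ^ k * (\<integral>y. G k y \<partial>\<psi> i \<eta> z))"
        by (simp only: integral_mult_right_zero)
      finally show ?thesis .
    qed
    have step3: "(\<integral>y. G k y \<partial>\<psi> i \<eta> z) = D k \<eta> z + (\<Sum>a\<le>p. (\<eta> * \<kappa>) ^ a / fact a * X a k z)" for k
      unfolding D_def X_def texp_def by simp
    have step4: "(\<Sum>m\<le>n. \<eta> ^ m * Gc L \<kappa> \<phi> (i # is) m z)
        = (\<Sum>m\<le>n. \<eta> ^ m * (\<Sum>a\<le>m. \<kappa> ^ a / fact a * X a (m - a) z))"
      unfolding X_def G_def by simp
    show "(\<integral>y. Rr \<eta> y \<partial>\<psi> i \<eta> z) + (\<Sum>k\<le>n. \<eta> ^ k * D k \<eta> z)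
       + (\<Sum>k\<le>n. \<Sum>a\<in>{n - k<..p}. \<eta> ^ k * ((\<eta> * \<kappa>) ^ a / fact a * X a k z))
       = (\<integral>z1. \<phi> z1 \<partial>run (\<lambda>i. \<psi> i \<eta>) (i # is) z) - (\<Sum>k\<le>n. \<eta> ^ k * Gc L \<kappa> \<phi> (i # is) k z)"
      unfolding step1 step2 step3 step4
        expand_algebra[OF np, of \<eta> "\<lambda>k. D k \<eta> z" \<kappa> "\<lambda>a k. X a k z"]
      by simp
  qed
qed

fun Qs :: "(nat \<Rightarrow> nat \<Rightarrow> real) \<Rightarrow> nat list \<Rightarrow> real" where
  "Qs T [] = 0"
| "Qs T (i # is) = Qs T is + (\<Sum>j\<leftarrow>is. T i j) + T i i / 2"

lemma Qs_snoc: "Qs T (xs @ [i]) = Qs T xs + (\<Sum>j\<leftarrow>xs. T j i) + T i i / 2"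
  by (induction xs) (simp_all add: algebra_simps)

lemma sum_list_map_rev: "(\<Sum>j\<leftarrow>rev xs. f j) = (\<Sum>j\<leftarrow>xs. (f j :: real))"
  by (simp add: rev_map[symmetric] sum_list_rev)

lemma Qs_rev: "Qs T xs + Qs T (rev xs) = (\<Sum>a\<leftarrow>xs. \<Sum>b\<leftarrow>xs. T a b)"
proof (induction xs)
  case Nil then show ?case by simp
next
  case (Cons i xs)
  have "Qs T (i # xs) + Qs T (rev (i # xs))
      = (Qs T xs + Qs T (rev xs)) + (\<Sum>j\<leftarrow>xs. T i j) + (\<Sum>j\<leftarrow>xs. T j i) + T i i"
    by (simp add: Qs_snoc sum_list_map_rev algebra_simps)
  also have "\<dots> = (\<Sum>a\<leftarrow>i # xs. \<Sum>b\<leftarrow>i # xs. T a b)"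
    using Cons by (simp add: sum_list_addf algebra_simps)
  finally show ?case .
qed

lemma perm_sum_list:
  assumes "xs \<in> permutations_of_set A"
  shows "(\<Sum>j\<leftarrow>xs. f j) = (\<Sum>j\<in>A. (f j :: real))"
  using assms by (auto simp: permutations_of_set_def sum_list_distinct_conv_sum_set)

lemma Qs_avg:
  assumes fin: "finite A"
  shows "(\<Sum>xs\<in>permutations_of_set A. Qs T xs)
       = real (card (permutations_of_set A)) / 2 * (\<Sum>a\<in>A. \<Sum>b\<in>A. T a b)"
proof -
  let ?P = "permutations_of_set A"
  have r: "(\<Sum>xs\<in>?P. Qs T (rev xs)) = (\<Sum>xs\<in>?P. Qs T xs)"
    by (rule sum.reindex_bij_witness[where i=rev and j=rev])
       (auto simp: permutations_of_set_def)
  have "2 * (\<Sum>xs\<in>?P. Qs T xs) = (\<Sum>xs\<in>?P. Qs T xs + Qs T (rev xs))"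
    using r by (simp add: sum.distrib)
  also have "\<dots> = (\<Sum>xs\<in>?P. \<Sum>a\<in>A. \<Sum>b\<in>A. T a b)"
  proof (rule sum.cong[OF refl])
    fix xs assume xs: "xs \<in> ?P"
    have "Qs T xs + Qs T (rev xs) = (\<Sum>a\<leftarrow>xs. \<Sum>b\<leftarrow>xs. T a b)" by (rule Qs_rev)
    also have "\<dots> = (\<Sum>a\<in>A. \<Sum>b\<leftarrow>xs. T a b)" by (rule perm_sum_list[OF xs])
    also have "\<dots> = (\<Sum>a\<in>A. \<Sum>b\<in>A. T a b)" using perm_sum_list[OF xs] by simp
    finally show "Qs T xs + Qs T (rev xs) = (\<Sum>a\<in>A. \<Sum>b\<in>A. T a b)" .
  qed
  also have "\<dots> = real (card ?P) * (\<Sum>a\<in>A. \<Sum>b\<in>A. T a b)" by simp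
  finally show ?thesis by simp
qed

lemma Gc_0: "Gc L \<kappa> \<phi> is 0 = \<phi>"
  by (induction "is") auto

lemma Gc_1: "Gc L \<kappa> \<phi> is 1 = (\<lambda>z. \<kappa> * (\<Sum>j\<leftarrow>is. L j \<phi> z))"
proof (induction "is")
  case Nil then show ?case by simp
next
  case (Cons i "is")
  show ?case
  proof (rule ext)
    fix z
    have "Gc L \<kappa> \<phi> (i # is) 1 z = Gc L \<kappa> \<phi> is 1 z + \<kappa> * L i (Gc L \<kappa> \<phi> is 0) z"
      by simp
    then show "Gc L \<kappa> \<phi> (i # is) 1 z = \<kappa> * (\<Sum>j\<leftarrow>i # is. L j \<phi> z)"
      using Cons by (simp add: Gc_0 algebra_simps)
  qed
qed

lemma Gc_2:
  fixes U :: "nat \<Rightarrow> real^'d \<Rightarrow> real" and Minv :: "real^'d^'d" and \<phi> :: "('d::finite) phase \<Rightarrow> real"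
    and aa cc :: real
  assumes \<phi>: "test_fun \<phi>" and U: "\<forall>i\<in>set is. smooth_bdd_deriv (U i)"
  defines "L \<equiv> (\<lambda>i. Lop (U i) aa cc Minv)"
  shows "Gc L \<kappa> \<phi> is 2 = (\<lambda>z. \<kappa> ^ 2 * Qs (\<lambda>a b. L a (L b \<phi>) z) is)"
  using U
proof (induction "is")
  case Nil then show ?case by simp
next
  case (Cons i "is")
  have Ui: "smooth_bdd_deriv (U i)" using Cons.prems by simp
  have tj: "\<forall>j\<in>set is. test_fun (L j \<phi>)" using Cons.prems \<phi> unfolding L_def by (auto intro: test_fun_Lop)
  have lin: "L i (\<lambda>z. \<kappa> * (\<Sum>j\<leftarrow>is. L j \<phi> z)) = (\<lambda>z. \<kappa> * (\<Sum>j\<leftarrow>is. L i (L j \<phi>) z))"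
  proof -
    have "L i (\<lambda>z. \<kappa> * (\<Sum>j\<leftarrow>is. L j \<phi> z)) = (\<lambda>z. \<kappa> * L i (\<lambda>z. \<Sum>j\<leftarrow>is. L j \<phi> z) z)"
      unfolding L_def by (rule Lop_cmult) (use tj test_fun_sum_list in \<open>auto simp: L_def\<close>)
    also have "L i (\<lambda>z. \<Sum>j\<leftarrow>is. L j \<phi> z) = (\<lambda>z. \<Sum>j\<leftarrow>is. L i (L j \<phi>) z)"
      unfolding L_def by (rule Lop_sum_list) (use tj in \<open>auto simp: L_def\<close>)
    finally show ?thesis .
  qed
  show ?case
  proof (rule ext)
    fix z
    have "Gc L \<kappa> \<phi> (i # is) 2 z = Gc L \<kappa> \<phi> is 2 z + \<kappa> * L i (Gc L \<kappa> \<phi> is 1) z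
          + \<kappa> ^ 2 / 2 * L i (L i (Gc L \<kappa> \<phi> is 0)) z"
      by (simp add: numeral_2_eq_2)
    also have "\<dots> = \<kappa> ^ 2 * Qs (\<lambda>a b. L a (L b \<phi>) z) is + \<kappa> * (\<kappa> * (\<Sum>j\<leftarrow>is. L i (L j \<phi>) z))
          + \<kappa> ^ 2 / 2 * L i (L i \<phi>) z"
      unfolding Gc_1 Gc_0 lin using Cons by simp
    also have "\<dots> = \<kappa> ^ 2 * Qs (\<lambda>a b. L a (L b \<phi>) z) (i # is)"
      by (simp add: algebra_simps power2_eq_square)
    finally show "Gc L \<kappa> \<phi> (i # is) 2 z = \<kappa> ^ 2 * Qs (\<lambda>a b. L a (L b \<phi>) z) (i # is)" .
  qed
qed

theorem theorem2:
  fixes K p :: nat and C :: real and M :: "real^'d^'d"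
    and U :: "nat \<Rightarrow> real^'d \<Rightarrow> real"
    and \<psi> :: "nat \<Rightarrow> real \<Rightarrow> ('d::finite) phase \<Rightarrow> 'd phase measure"
  assumes "K \<ge> 1"
    and "C > 0"
    and "transpose M = M" and "\<forall>x. x \<noteq> 0 \<longrightarrow> x \<bullet> (M *v x) > 0"
    and "\<forall>i\<in>{1..K}. smooth_bdd_deriv (U i)"
    and "\<forall>i\<in>{1..K}. good_step (\<psi> i)"
    and "\<forall>i\<in>{1..K}. \<forall>\<phi>. test_fun \<phi> \<longrightarrow>
           weak_O (\<lambda>\<eta> z. (\<integral>z1. \<phi> z1 \<partial>(\<psi> i \<eta> z))
                         - texp p (\<eta> * real K) (Lop (U i) (1 / real K) (C / real K) (matrix_inv M)) \<phi> z)
                  (\<lambda>\<eta>. \<eta> ^ (p + 1))"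
  shows "\<forall>\<phi>. test_fun \<phi> \<longrightarrow>
           weak_O (\<lambda>\<eta> z. Uop K \<psi> \<eta> \<phi> z
                         - texp p (\<eta> * real K) (Lop (\<lambda>\<theta>. \<Sum>i=1..K. U i \<theta>) 1 C (matrix_inv M)) \<phi> z)
                  (\<lambda>\<eta>. real K * \<eta> ^ (p + 1) + real K * \<eta> ^ 3)"
proof (intro allI impI)
  fix \<phi> :: "'d phase \<Rightarrow> real" assume \<phi>: "test_fun \<phi>"
  define L where "L = (\<lambda>i. Lop (U i) (1 / real K) (C / real K) (matrix_inv M))"
  define Lf where "Lf = Lop (\<lambda>\<theta>. \<Sum>i=1..K. U i \<theta>) 1 C (matrix_inv M)"
  define n where "n = min p 2"
  define P where "P = permutations_of_set {1..K}"
  have K1: "K \<ge> 1" using assms(1) .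
  have U: "\<forall>i\<in>{1..K}. smooth_bdd_deriv (U i)" using assms(5) .
  have gs: "\<forall>i\<in>{1..K}. good_step (\<psi> i)" using assms(6) .
  have Lt: "\<forall>i\<in>{1..K}. \<forall>f. test_fun f \<longrightarrow> test_fun (L i f)"
    using U unfolding L_def by (auto intro: test_fun_Lop)
  have dU: "\<forall>i\<in>{1..K}. \<forall>\<theta>. U i differentiable at \<theta>"
    using U unfolding smooth_bdd_deriv_def by (metis iter_dd.simps(1))
  have Lf_eq: "Lf f = (\<lambda>z. \<Sum>i\<in>{1..K}. L i f z)" for f
  proof -
    have "Lf f = (\<lambda>z. \<Sum>i\<in>{1..K}. Lop (U i) (1 / real (card {1..K})) (C / real (card {1..K})) (matrix_inv M) f z)"
      unfolding Lf_def by (rule Lfull_eq) (use K1 dU in auto)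
    then show ?thesis unfolding L_def by simp
  qed
  have Lft: "test_fun f \<Longrightarrow> test_fun (Lf f)" for f
    unfolding Lf_eq using Lt by (intro test_fun_sum) auto
  have hyp: "\<forall>i\<in>{1..K}. \<forall>f. test_fun f \<longrightarrow>
        weak_O (\<lambda>\<eta> z. (\<integral>z1. f z1 \<partial>\<psi> i \<eta> z) - texp p (\<eta> * real K) (L i) f z) (\<lambda>\<eta>. \<eta> ^ (p + 1))"
    using assms(7) unfolding L_def by simp
  have np: "n \<le> p" by (simp add: n_def)
  have g0: "\<forall>\<eta>>0. 0 \<le> (\<eta>::real) ^ (n + 1)" by simp
  have finP: "finite P" and neP: "P \<noteq> {}" by (auto simp: P_def)
  have cP: "real (card P) > 0" using finP neP by (simp add: card_gt_0_iff)
  have setP: "set \<pi> = {1..K}" if "\<pi> \<in> P" for \<pi> using that by (auto simp: P_def permutations_of_set_def)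
  define E where "E \<pi> \<eta> z = (\<integral>z1. \<phi> z1 \<partial>run (\<lambda>i. \<psi> i \<eta>) \<pi> z) - (\<Sum>k\<le>n. \<eta> ^ k * Gc L (real K) \<phi> \<pi> k z)"
    for \<pi> \<eta> z
  have wE: "\<forall>\<pi>\<in>P. weak_O (E \<pi>) (\<lambda>\<eta>. \<eta> ^ (n + 1))"
  proof
    fix \<pi> assume "\<pi> \<in> P"
    then have "set \<pi> \<subseteq> {1..K}" using setP by simp
    from expansion[OF gs Lt hyp np \<phi> this] show "weak_O (E \<pi>) (\<lambda>\<eta>. \<eta> ^ (n + 1))"
      unfolding E_def[abs_def] .
  qed
  have avg: "(\<Sum>\<pi>\<in>P. Gc L (real K) \<phi> \<pi> k z) / real (card P) = real K ^ k / fact k * (Lf ^^ k) \<phi> z"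
    if k: "k \<le> n" for k z
  proof -
    have "k = 0 \<or> k = 1 \<or> k = 2" using k by (auto simp: n_def)
    moreover have "(\<Sum>\<pi>\<in>P. Gc L (real K) \<phi> \<pi> 0 z) / real (card P) = real K ^ 0 / fact 0 * (Lf ^^ 0) \<phi> z"
      using cP by (simp add: Gc_0)
    moreover have "(\<Sum>\<pi>\<in>P. Gc L (real K) \<phi> \<pi> 1 z) / real (card P) = real K ^ 1 / fact 1 * (Lf ^^ 1) \<phi> z"
    proof -
      have "(\<Sum>\<pi>\<in>P. Gc L (real K) \<phi> \<pi> 1 z) = (\<Sum>\<pi>\<in>P. real K * (\<Sum>j\<in>{1..K}. L j \<phi> z))"
        unfolding Gc_1 by (intro sum.cong refl) (simp add: perm_sum_list[of _ "{1..K}"] P_def)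
      also have "\<dots> = real (card P) * (real K * Lf \<phi> z)" by (simp add: Lf_eq)
      finally show ?thesis using cP by simp
    qed
    moreover have "(\<Sum>\<pi>\<in>P. Gc L (real K) \<phi> \<pi> 2 z) / real (card P) = real K ^ 2 / fact 2 * (Lf ^^ 2) \<phi> z"
    proof -
      define T where "T a b = L a (L b \<phi>) z" for a b
      have "(\<Sum>\<pi>\<in>P. Gc L (real K) \<phi> \<pi> 2 z) = (\<Sum>\<pi>\<in>P. real K ^ 2 * Qs T \<pi>)"
      proof (intro sum.cong refl)
        fix \<pi> assume "\<pi> \<in> P"
        then have "\<forall>i\<in>set \<pi>. smooth_bdd_deriv (U i)" using setP U by auto
        from Gc_2[OF \<phi> this, of "1 / real K" "C / real K" "matrix_inv M" "real K"]
        show "Gc L (real K) \<phi> \<pi> 2 z = real K ^ 2 * Qs T \<pi>" unfolding L_def T_def by simp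
      qed
      also have "\<dots> = real K ^ 2 * (real (card P) / 2 * (\<Sum>a\<in>{1..K}. \<Sum>b\<in>{1..K}. T a b))"
        unfolding P_def by (simp add: sum_distrib_left[symmetric] Qs_avg)
      also have "(\<Sum>a\<in>{1..K}. \<Sum>b\<in>{1..K}. T a b) = (Lf ^^ 2) \<phi> z"
      proof -
        have tb: "\<forall>b\<in>{1..K}. test_fun (L b \<phi>)" using Lt \<phi> by auto
        have "(Lf ^^ 2) \<phi> z = Lf (Lf \<phi>) z" by (simp add: numeral_2_eq_2)
        also have "\<dots> = (\<Sum>a\<in>{1..K}. L a (\<lambda>z. \<Sum>b\<in>{1..K}. L b \<phi> z) z)" by (simp add: Lf_eq)
        also have "\<dots> = (\<Sum>a\<in>{1..K}. \<Sum>b\<in>{1..K}. L a (L b \<phi>) z)"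
        proof (intro sum.cong refl)
          fix a assume "a \<in> {1..K}"
          have "L a (\<lambda>z. \<Sum>b\<in>{1..K}. L b \<phi> z) = (\<lambda>z. \<Sum>b\<in>{1..K}. L a (L b \<phi>) z)"
            unfolding L_def by (rule Lop_sum) (use tb in \<open>auto simp: L_def\<close>)
          then show "L a (\<lambda>z. \<Sum>b\<in>{1..K}. L b \<phi> z) z = (\<Sum>b\<in>{1..K}. L a (L b \<phi>) z)" by simp
        qed
        finally show ?thesis unfolding T_def by simp
      qed
      finally show ?thesis using cP by simp
    qed
    ultimately show ?thesis by auto
  qed
  define Tr where "Tr a \<eta> z = \<eta> ^ 0 * ((\<eta> * real K) ^ a / fact a * (Lf ^^ a) \<phi> z)" for a \<eta> z
  have wTr: "weak_O (\<lambda>\<eta> z. \<Sum>a\<in>{n<..p}. Tr a \<eta> z) (\<lambda>\<eta>. \<eta> ^ (n + 1))"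
  proof (rule weak_O_sum[OF _ _ g0], simp, rule ballI)
    fix a assume a: "a \<in> {n<..p}"
    have "pb ((Lf ^^ a) \<phi>)" by (rule test_fun_pb, rule test_fun_funpow[OF Lft \<phi>])
    moreover have "n + 1 \<le> 0 + a" using a by auto
    ultimately show "weak_O (Tr a) (\<lambda>\<eta>. \<eta> ^ (n + 1))"
      unfolding Tr_def[abs_def] by (rule weak_O_term)
  qed
  have wAll: "weak_O (\<lambda>\<eta> z. (1 / real (card P)) * (\<Sum>\<pi>\<in>P. E \<pi> \<eta> z) + (-1) * (\<Sum>a\<in>{n<..p}. Tr a \<eta> z))
      (\<lambda>\<eta>. \<eta> ^ (n + 1))"
    by (intro weak_O_add weak_O_cmult weak_O_sum finP wE wTr g0)
  have ident: "(1 / real (card P)) * (\<Sum>\<pi>\<in>P. E \<pi> \<eta> z) + (-1) * (\<Sum>a\<in>{n<..p}. Tr a \<eta> z)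
      = Uop K \<psi> \<eta> \<phi> z - texp p (\<eta> * real K) Lf \<phi> z" for \<eta> z
  proof -
    have U1: "Uop K \<psi> \<eta> \<phi> z = (\<Sum>\<pi>\<in>P. \<integral>z1. \<phi> z1 \<partial>run (\<lambda>i. \<psi> i \<eta>) \<pi> z) / real (card P)"
      unfolding Uop_def P_def[symmetric] using finP neP by (simp add: integral_pmf_of_set)
    have "(1 / real (card P)) * (\<Sum>\<pi>\<in>P. E \<pi> \<eta> z)
        = Uop K \<psi> \<eta> \<phi> z - (\<Sum>k\<le>n. \<eta> ^ k * ((\<Sum>\<pi>\<in>P. Gc L (real K) \<phi> \<pi> k z) / real (card P)))"
      unfolding U1 E_def by (simp add: sum_subtractf sum_divide_distrib sum_distrib_left diff_divide_distrib
          sum.swap[of _ P "{..n}"] mult_ac)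
    also have "(\<Sum>k\<le>n. \<eta> ^ k * ((\<Sum>\<pi>\<in>P. Gc L (real K) \<phi> \<pi> k z) / real (card P)))
        = (\<Sum>k\<le>n. (\<eta> * real K) ^ k / fact k * (Lf ^^ k) \<phi> z)"
      by (intro sum.cong refl) (simp add: avg power_mult_distrib)
    finally have 1: "(1 / real (card P)) * (\<Sum>\<pi>\<in>P. E \<pi> \<eta> z)
        = Uop K \<psi> \<eta> \<phi> z - (\<Sum>k\<le>n. (\<eta> * real K) ^ k / fact k * (Lf ^^ k) \<phi> z)" .
    have "texp p (\<eta> * real K) Lf \<phi> z = (\<Sum>k\<le>p. (\<eta> * real K) ^ k / fact k * (Lf ^^ k) \<phi> z)"
      unfolding texp_def ..
    also have "\<dots> = (\<Sum>k\<le>n. (\<eta> * real K) ^ k / fact k * (Lf ^^ k) \<phi> z) + (\<Sum>a\<in>{n<..p}. Tr a \<eta> z)"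
    proof -
      have "{..p} = {..n} \<union> {n<..p}" using np by auto
      moreover have "(\<Sum>k\<in>{..n} \<union> {n<..p}. (\<eta> * real K) ^ k / fact k * (Lf ^^ k) \<phi> z)
          = (\<Sum>k\<le>n. (\<eta> * real K) ^ k / fact k * (Lf ^^ k) \<phi> z) + (\<Sum>k\<in>{n<..p}. (\<eta> * real K) ^ k / fact k * (Lf ^^ k) \<phi> z)"
        by (rule sum.union_disjoint) auto
      ultimately show ?thesis unfolding Tr_def by simp
    qed
    finally show ?thesis using 1 by simp
  qed
  have w1: "weak_O (\<lambda>\<eta> z. Uop K \<psi> \<eta> \<phi> z - texp p (\<eta> * real K) Lf \<phi> z) (\<lambda>\<eta>. \<eta> ^ (n + 1))"
    by (rule weak_O_cong[OF wAll zero_less_one]) (intro ballI allI, rule ident)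
  have mono: "\<forall>\<eta>\<in>{0<..1}. \<eta> ^ (n + 1) \<le> real K * \<eta> ^ (p + 1) + real K * \<eta> ^ 3"
  proof
    fix \<eta> :: real assume \<eta>: "\<eta> \<in> {0<..1}"
    have Kr: "real K \<ge> 1" using K1 by simp
    have a: "0 \<le> real K * \<eta> ^ (p + 1)" "0 \<le> real K * \<eta> ^ 3" using \<eta> by auto
    show "\<eta> ^ (n + 1) \<le> real K * \<eta> ^ (p + 1) + real K * \<eta> ^ 3"
    proof (cases "p \<le> 2")
      case True
      then have "n = p" by (simp add: n_def)
      moreover have "1 * \<eta> ^ (p + 1) \<le> real K * \<eta> ^ (p + 1)"
        by (rule mult_right_mono[OF Kr]) (use \<eta> in simp)
      ultimately show ?thesis using a by simp
    next
      case False
      then have "n = 2" by (simp add: n_def)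
      moreover have "1 * \<eta> ^ 3 \<le> real K * \<eta> ^ 3"
        by (rule mult_right_mono[OF Kr]) (use \<eta> in simp)
      ultimately show ?thesis using a by simp
    qed
  qed
  show "weak_O (\<lambda>\<eta> z. Uop K \<psi> \<eta> \<phi> z
                         - texp p (\<eta> * real K) (Lop (\<lambda>\<theta>. \<Sum>i=1..K. U i \<theta>) 1 C (matrix_inv M)) \<phi> z)
                  (\<lambda>\<eta>. real K * \<eta> ^ (p + 1) + real K * \<eta> ^ 3)"
    using weak_O_mono[OF w1 g0 zero_less_one mono] unfolding Lf_def .
qed

end
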